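(* Let $A$ be an even Moore algebra over $R$ with characteristic series $u(t)=\sum_{i\ge1}u_it^i$, and assume $u_1$ is not a zero divisor in $R$. Then there is an isomorphism of $R$-modules $H^*(A,A)\cong R[[t]]/(u'(t))$, where $u'(t)=\sum_{i\ge1}iu_it^{i-1}$ is the formal derivative of $u(t)$.
   Context: $R$ is an evenly graded commutative ring. An even Moore algebra of (even) degree $d$ over $R$ is a unital $A_\infty$-algebra (a degree $-1$ coderivation $m$ of the tensor coalgebra $T\Sigma A$ with $m^2=0$, $m_0=0$, $m_1$ the suspended differential, strict unit $1$ of degree $0$ with $m_2[1|a]=[a]=(-1)^{|a|}m_2[a|1]$ and $m_i$, $i\ne2$, vanishing when an argument is $1$) whose underlying complex is free on $1$ (degree $0$) and $y$ (degree $d+1$); its characteristic series is $u(t)=\sum_{i\ge1}u_it^i$ with $m_i[y|\dots|y]=u_i[1]$, where $t$ is a formal variable of degree $-(d+2)$. $H^*(A,A)$ is the cohomology of the Hochschild complex $\mathrm{Coder}(T\Sigma A)$ with differential $f\mapsto[f,m]$ (graded commutator). *)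

theory Defs
  imports "HOL-Computational_Algebra.Formal_Power_Series"
begin

definition evenly_graded_ring :: "(int \<Rightarrow> 'r::comm_ring_1 set) \<Rightarrow> bool" where
  "evenly_graded_ring Rg \<longleftrightarrow>
     (\<forall>k. 0 \<in> Rg k \<and> (\<forall>a\<in>Rg k. \<forall>b\<in>Rg k. a + b \<in> Rg k \<and> - a \<in> Rg k)) \<and>
     (\<forall>j k. \<forall>a\<in>Rg j. \<forall>b\<in>Rg k. a * b \<in> Rg (j + k)) \<and>
     1 \<in> Rg 0 \<and>
     (\<forall>x. \<exists>!c :: int \<Rightarrow> 'r. finite {k. c k \<noteq> 0} \<and> (\<forall>k. c k \<in> Rg k) \<and>
            x = (\<Sum>k\<in>{k. c k \<noteq> 0}. c k)) \<and>
     (\<forall>k. odd k \<longrightarrow> Rg k = {0})"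

text \<open>Basis letters of \<Sigma>A: s1 (degree 1) and sy (degree d+2), where |y| = d+1.
  Basis of T\<Sigma>A: words (lists of letters), including the empty word (T^0 = R).\<close>

datatype letter = One | Y

fun ldeg :: "int \<Rightarrow> letter \<Rightarrow> int" where
  "ldeg d One = 1"
| "ldeg d Y = d + 2"

definition wdeg :: "int \<Rightarrow> letter list \<Rightarrow> int" where
  "wdeg d w = sum_list (map (ldeg d) w)"

definition ksign :: "int \<Rightarrow> 'r::comm_ring_1" where
  "ksign n = (if even n then 1 else -1)"

text \<open>A coderivation of T\<Sigma>A is determined by its corestriction T\<Sigma>A \<rightarrow> \<Sigma>A, which
  (by freeness) is determined by the coefficient f w b of the basis letter b in the value on
  the basis word w.\<close>

type_synonym 'r cod = "letter list \<Rightarrow> letter \<Rightarrow> 'r"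

definition hom :: "(int \<Rightarrow> 'r set) \<Rightarrow> int \<Rightarrow> int \<Rightarrow> 'r cod \<Rightarrow> bool" where
  "hom Rg d k f \<longleftrightarrow> (\<forall>w b. f w b \<in> Rg (k + wdeg d w - ldeg d b))"

text \<open>Corestriction of the composite of coderivations f^ composed with g^, where g has degree kg
  (Koszul sign (-1)^(kg * degree of the letters g passes over)).\<close>

definition circ :: "int \<Rightarrow> 'r::comm_ring_1 cod \<Rightarrow> 'r cod \<Rightarrow> int \<Rightarrow> 'r cod" where
  "circ d f g kg = (\<lambda>w b. \<Sum>j\<le>length w. \<Sum>i\<le>j.
       ksign (kg * wdeg d (take i w)) *
       (g (drop i (take j w)) One * f (take i w @ [One] @ drop j w) b
      + g (drop i (take j w)) Y * f (take i w @ [Y] @ drop j w) b))"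

definition br :: "int \<Rightarrow> 'r::comm_ring_1 cod \<Rightarrow> int \<Rightarrow> 'r cod \<Rightarrow> int \<Rightarrow> 'r cod" where
  "br d f kf g kg = (\<lambda>w b. circ d f g kg w b - ksign (kf * kg) * circ d g f kf w b)"

definition even_moore_algebra ::
    "(int \<Rightarrow> 'r::comm_ring_1 set) \<Rightarrow> int \<Rightarrow> 'r cod \<Rightarrow> bool" where
  "even_moore_algebra Rg d m \<longleftrightarrow>
     even d \<and>
     hom Rg d (-1) m \<and>
     (\<forall>w b. circ d m m (-1) w b = 0) \<and>
     (\<forall>b. m [] b = 0) \<and>
     (\<forall>x b. m [One, x] b = (if b = x then 1 else 0)) \<and>
     (\<forall>x b. m [x, One] b = ksign (ldeg d x - 1) * (if b = x then 1 else 0)) \<and>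
     (\<forall>w b. length w \<noteq> 2 \<longrightarrow> One \<in> set w \<longrightarrow> m w b = 0)"

definition char_series :: "'r::comm_ring_1 cod \<Rightarrow> 'r fps" where
  "char_series m = Abs_fps (\<lambda>i. if i = 0 then 0 else m (replicate i Y) One)"

definition hdiff :: "int \<Rightarrow> 'r::comm_ring_1 cod \<Rightarrow> int \<Rightarrow> 'r cod \<Rightarrow> 'r cod" where
  "hdiff d m k f = br d f k m (-1)"

definition cocycles :: "(int \<Rightarrow> 'r::comm_ring_1 set) \<Rightarrow> int \<Rightarrow> 'r cod \<Rightarrow> int \<Rightarrow> 'r cod set" where
  "cocycles Rg d m k = {f. hom Rg d k f \<and> hdiff d m k f = (\<lambda>w b. 0)}"

definition coboundaries :: "(int \<Rightarrow> 'r::comm_ring_1 set) \<Rightarrow> int \<Rightarrow> 'r cod \<Rightarrow> int \<Rightarrow> 'r cod set" where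
  "coboundaries Rg d m k = hdiff d m (k + 1) ` {f. hom Rg d (k + 1) f}"

section \<open>Graded power series R[[t]] with |t| = -(d+2)\<close>

definition gfps :: "(int \<Rightarrow> 'r::comm_ring_1 set) \<Rightarrow> int \<Rightarrow> int \<Rightarrow> 'r fps set" where
  "gfps Rg d k = {p. \<forall>i. fps_nth p i \<in> Rg (k + int i * (d + 2))}"

definition gideal :: "(int \<Rightarrow> 'r::comm_ring_1 set) \<Rightarrow> int \<Rightarrow> 'r fps \<Rightarrow> int \<Rightarrow> int \<Rightarrow> 'r fps set" where
  "gideal Rg d q e k = {q * g | g. g \<in> gfps Rg d (k - e)}"

end

theory Submission
  imports Defs
begin


lemma ksign_add: "ksign (a + b) = (ksign a * ksign b :: 'r::comm_ring_1)"
  unfolding ksign_def by auto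

lemma ksign_sq[simp]: "ksign a * ksign a = (1 :: 'r::comm_ring_1)"
  unfolding ksign_def by auto

lemma ksign_neg[simp]: "ksign (- a) = (ksign a :: 'r::comm_ring_1)"
  unfolding ksign_def by auto

lemma ksign_0[simp]: "ksign 0 = 1" and ksign_1[simp]: "ksign 1 = -1"
  unfolding ksign_def by auto

lemma ksign_even: "even a \<Longrightarrow> ksign a = 1" and ksign_odd: "odd a \<Longrightarrow> ksign a = -1"
  unfolding ksign_def by auto

lemma ksign_cong_even: assumes "even (a - b)" shows "ksign a = ksign b"
proof -
  have "a = (a - b) + b" by simp
  then have "even a = even b" using assms by (metis even_add)
  then show ?thesis unfolding ksign_def by simp
qed

lemma ksign_Suc: "ksign (a + 1) = - ksign a"
  unfolding ksign_def by auto

definition S2 :: "'a list \<Rightarrow> ('a list \<times> 'a list) set" where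
  "S2 w = {(p, q). p @ q = w}"

definition S3 :: "'a list \<Rightarrow> ('a list \<times> 'a list \<times> 'a list) set" where
  "S3 w = {(p, q, r). p @ q @ r = w}"

lemma finite_S2[simp]: "finite (S2 w)"
proof -
  have "S2 w \<subseteq> (\<lambda>i. (take i w, drop i w)) ` {..length w}"
  proof
    fix x assume "x \<in> S2 w"
    then obtain p q where x: "x = (p, q)" "p @ q = w" unfolding S2_def by auto
    then show "x \<in> (\<lambda>i. (take i w, drop i w)) ` {..length w}"
      by (auto intro!: image_eqI[where x = "length p"])
  qed
  then show ?thesis by (rule finite_subset) auto
qed

lemma finite_S3[simp]: "finite (S3 w)"
proof -
  let ?A = "{xs. set xs \<subseteq> set w \<and> length xs \<le> length w}"
  have "S3 w \<subseteq> ?A \<times> ?A \<times> ?A" unfolding S3_def by auto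
  moreover have "finite ?A" by (rule finite_lists_length_le) auto
  ultimately show ?thesis by (meson finite_SigmaI finite_subset)
qed

lemma circ_S3:
  "circ d f g kg w b = (\<Sum>(p, q, r)\<in>S3 w. ksign (kg * wdeg d p) *
      (g q One * f (p @ [One] @ r) b + g q Y * f (p @ [Y] @ r) b))"
proof -
  define T where "T = (\<lambda>(p, q, r). ksign (kg * wdeg d p) *
      (g q One * f (p @ [One] @ r) b + g q Y * f (p @ [Y] @ r) b) :: 'a)"
  define h where "h = (\<lambda>(j::nat, i::nat). (take i w, drop i (take j w), drop j w))"
  have "circ d f g kg w b = (\<Sum>j\<le>length w. \<Sum>i\<le>j. T (h (j, i)))"
    unfolding circ_def T_def h_def by simp
  also have "\<dots> = (\<Sum>(j, i)\<in>Sigma {..length w} (\<lambda>j. {..j}). T (h (j, i)))"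
    by (rule sum.Sigma) auto
  also have "\<dots> = (\<Sum>x\<in>Sigma {..length w} (\<lambda>j. {..j}). T (h x))"
    by (simp add: case_prod_beta)
  also have "\<dots> = (\<Sum>x\<in>S3 w. T x)"
  proof (rule sum.reindex_bij_betw)
    show "bij_betw h (Sigma {..length w} (\<lambda>j. {..j})) (S3 w)"
    proof (rule bij_betwI')
      fix x y assume x: "x \<in> Sigma {..length w} (\<lambda>j. {..j})" and y: "y \<in> Sigma {..length w} (\<lambda>j. {..j})"
      obtain j i where xe: "x = (j, i)" by (cases x)
      obtain j' i' where ye: "y = (j', i')" by (cases y)
      have ij: "i \<le> j" "j \<le> length w" "i' \<le> j'" "j' \<le> length w" using x y xe ye by auto
      show "(h x = h y) = (x = y)"
      proof
        assume "h x = h y"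
        then have "take i w = take i' w" "drop j w = drop j' w" unfolding h_def xe ye by auto
        then have "length (take i w) = length (take i' w)" "length (drop j w) = length (drop j' w)" by simp_all
        then have "i = i'" "j = j'" using ij by auto
        then show "x = y" using xe ye by simp
      qed simp
    next
      fix x assume x: "x \<in> Sigma {..length w} (\<lambda>j. {..j})"
      obtain j i where xe: "x = (j, i)" by (cases x)
      have ij: "i \<le> j" using x xe by auto
      have "take i w @ drop i (take j w) = take j w"
        using ij by (metis append_take_drop_id min.absorb1 take_take)
      then have "take i w @ drop i (take j w) @ drop j w = w"
        by (metis append.assoc append_take_drop_id)
      then show "h x \<in> S3 w" unfolding h_def S3_def xe by simp
    next
      fix y assume "y \<in> S3 w"
      then obtain p q r where y: "y = (p, q, r)" "p @ q @ r = w" unfolding S3_def by auto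
      show "\<exists>x\<in>Sigma {..length w} (\<lambda>j. {..j}). y = h x"
        using y unfolding h_def
        by (intro bexI[where x = "(length p + length q, length p)"]) auto
    qed
  qed
  finally show ?thesis unfolding T_def .
qed




definition S5 :: "'a list \<Rightarrow> ('a list \<times> 'a list \<times> 'a list \<times> 'a list \<times> 'a list) set" where
  "S5 w = {(a, b, c, d, e). a @ b @ c @ d @ e = w}"

lemma finite_S5[simp]: "finite (S5 w)"
proof -
  let ?A = "{xs. set xs \<subseteq> set w \<and> length xs \<le> length w}"
  have "S5 w \<subseteq> ?A \<times> ?A \<times> ?A \<times> ?A \<times> ?A" unfolding S5_def by auto
  moreover have "finite ?A" by (rule finite_lists_length_le) auto
  ultimately show ?thesis by (meson finite_SigmaI finite_subset)
qed

lemma mem_S2[simp]: "(p, q) \<in> S2 w \<longleftrightarrow> p @ q = w" unfolding S2_def by simp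
lemma mem_S3[simp]: "(p, q, r) \<in> S3 w \<longleftrightarrow> p @ q @ r = w" unfolding S3_def by simp
lemma mem_S5[simp]: "(a, b, c, d, e) \<in> S5 w \<longleftrightarrow> a @ b @ c @ d @ e = w" unfolding S5_def by simp

lemma flat1:
  "(\<Sum>(P, Q, R)\<in>S3 w. \<Sum>(a, q, x)\<in>S3 P. F a q x Q R) = (\<Sum>(a, q, x, Q, R)\<in>S5 w. F a q x Q R)"
proof -
  have "(\<Sum>(P, Q, R)\<in>S3 w. \<Sum>(a, q, x)\<in>S3 P. F a q x Q R)
      = (\<Sum>y\<in>S3 w. \<Sum>z\<in>S3 (fst y). (\<lambda>y z. case y of (P, Q, R) \<Rightarrow> case z of (a, q, x) \<Rightarrow> F a q x Q R) y z)"
    by (intro sum.cong) (auto simp: case_prod_beta)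
  also have "\<dots> = (\<Sum>(y, z)\<in>Sigma (S3 w) (\<lambda>y. S3 (fst y)). (case y of (P, Q, R) \<Rightarrow> case z of (a, q, x) \<Rightarrow> F a q x Q R))"
    by (rule sum.Sigma) auto
  also have "\<dots> = (\<Sum>(a, q, x, Q, R)\<in>S5 w. F a q x Q R)"
    by (rule sum.reindex_bij_witness[where i = "\<lambda>(a, q, x, Q, R). ((a @ q @ x, Q, R), (a, q, x))"
          and j = "\<lambda>((P, Q, R), (a, q, x)). (a, q, x, Q, R)"]) auto
  finally show ?thesis .
qed

lemma flat2:
  "(\<Sum>(P, Q, R)\<in>S3 w. \<Sum>(x, q, r)\<in>S3 R. F P Q x q r) = (\<Sum>(P, Q, x, q, r)\<in>S5 w. F P Q x q r)"
proof -
  have "(\<Sum>(P, Q, R)\<in>S3 w. \<Sum>(x, q, r)\<in>S3 R. F P Q x q r)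
      = (\<Sum>y\<in>S3 w. \<Sum>z\<in>S3 (snd (snd y)). (\<lambda>y z. case y of (P, Q, R) \<Rightarrow> case z of (x, q, r) \<Rightarrow> F P Q x q r) y z)"
    by (intro sum.cong) (auto simp: case_prod_beta)
  also have "\<dots> = (\<Sum>(y, z)\<in>Sigma (S3 w) (\<lambda>y. S3 (snd (snd y))). (case y of (P, Q, R) \<Rightarrow> case z of (x, q, r) \<Rightarrow> F P Q x q r))"
    by (rule sum.Sigma) auto
  also have "\<dots> = (\<Sum>(P, Q, x, q, r)\<in>S5 w. F P Q x q r)"
    by (rule sum.reindex_bij_witness[where i = "\<lambda>(P, Q, x, q, r). ((P, Q, x @ q @ r), (x, q, r))"
          and j = "\<lambda>((P, Q, R), (x, q, r)). (P, Q, x, q, r)"]) auto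
  finally show ?thesis .
qed

lemma flat3:
  "(\<Sum>(P, Q, R)\<in>S3 w. \<Sum>(p1, p2)\<in>S2 P. \<Sum>(r1, r2)\<in>S2 R. F p1 p2 Q r1 r2)
   = (\<Sum>(p1, p2, Q, r1, r2)\<in>S5 w. F p1 p2 Q r1 r2)"
proof -
  have "(\<Sum>(P, Q, R)\<in>S3 w. \<Sum>(p1, p2)\<in>S2 P. \<Sum>(r1, r2)\<in>S2 R. F p1 p2 Q r1 r2)
      = (\<Sum>y\<in>S3 w. \<Sum>z\<in>S2 (fst y) \<times> S2 (snd (snd y)). (\<lambda>y z. case y of (P, Q, R) \<Rightarrow> case z of ((p1, p2), (r1, r2)) \<Rightarrow> F p1 p2 Q r1 r2) y z)"
    by (intro sum.cong) (auto simp: case_prod_beta sum.cartesian_product)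
  also have "\<dots> = (\<Sum>(y, z)\<in>Sigma (S3 w) (\<lambda>y. S2 (fst y) \<times> S2 (snd (snd y))). (case y of (P, Q, R) \<Rightarrow> case z of ((p1, p2), (r1, r2)) \<Rightarrow> F p1 p2 Q r1 r2))"
    by (rule sum.Sigma) auto
  also have "\<dots> = (\<Sum>(p1, p2, Q, r1, r2)\<in>S5 w. F p1 p2 Q r1 r2)"
    by (rule sum.reindex_bij_witness[where i = "\<lambda>(p1, p2, Q, r1, r2). ((p1 @ p2, Q, r1 @ r2), ((p1, p2), (r1, r2)))"
          and j = "\<lambda>((P, Q, R), ((p1, p2), (r1, r2))). (p1, p2, Q, r1, r2)"]) auto
  finally show ?thesis .
qed

lemma flat4:
  "(\<Sum>(p1, Q', r2)\<in>S3 w. \<Sum>(p2, Q, r1)\<in>S3 Q'. F p1 p2 Q r1 r2)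
   = (\<Sum>(p1, p2, Q, r1, r2)\<in>S5 w. F p1 p2 Q r1 r2)"
proof -
  have "(\<Sum>(p1, Q', r2)\<in>S3 w. \<Sum>(p2, Q, r1)\<in>S3 Q'. F p1 p2 Q r1 r2)
      = (\<Sum>y\<in>S3 w. \<Sum>z\<in>S3 (fst (snd y)). (\<lambda>y z. case y of (p1, Q', r2) \<Rightarrow> case z of (p2, Q, r1) \<Rightarrow> F p1 p2 Q r1 r2) y z)"
    by (intro sum.cong) (auto simp: case_prod_beta)
  also have "\<dots> = (\<Sum>(y, z)\<in>Sigma (S3 w) (\<lambda>y. S3 (fst (snd y))). (case y of (p1, Q', r2) \<Rightarrow> case z of (p2, Q, r1) \<Rightarrow> F p1 p2 Q r1 r2))"
    by (rule sum.Sigma) auto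
  also have "\<dots> = (\<Sum>(p1, p2, Q, r1, r2)\<in>S5 w. F p1 p2 Q r1 r2)"
    by (rule sum.reindex_bij_witness[where i = "\<lambda>(p1, p2, Q, r1, r2). ((p1, p2 @ Q @ r1, r2), (p2, Q, r1))"
          and j = "\<lambda>((p1, Q', r2), (p2, Q, r1)). (p1, p2, Q, r1, r2)"]) auto
  finally show ?thesis .
qed

lemma S3_mid_cases:
  assumes "p' @ q' @ r' = P @ [c] @ R"
  shows "(\<exists>x. P = p' @ q' @ x \<and> r' = x @ [c] @ R)
       \<or> (\<exists>x. p' = P @ [c] @ x \<and> R = x @ q' @ r')
       \<or> (\<exists>p2 r1. P = p' @ p2 \<and> R = r1 @ r' \<and> q' = p2 @ [c] @ r1)"
proof -
  from assms have "p' @ (q' @ r') = P @ (c # R)" by simp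
  then obtain us where us: "(p' = P @ us \<and> us @ q' @ r' = c # R) \<or> (p' @ us = P \<and> q' @ r' = us @ c # R)"
    unfolding append_eq_append_conv2 by blast
  then show ?thesis
  proof
    assume a: "p' = P @ us \<and> us @ q' @ r' = c # R"
    show ?thesis
    proof (cases us)
      case Nil
      then have "q' @ r' = c # R" using a by simp
      then show ?thesis using a Nil by (cases q') auto
    next
      case (Cons u us')
      then show ?thesis using a by auto
    qed
  next
    assume a: "p' @ us = P \<and> q' @ r' = us @ c # R"
    then obtain vs where vs: "(q' = us @ vs \<and> vs @ r' = c # R) \<or> (q' @ vs = us \<and> r' = vs @ c # R)"
      unfolding append_eq_append_conv2 by blast
    then show ?thesis
    proof
      assume b: "q' = us @ vs \<and> vs @ r' = c # R"
      show ?thesis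
      proof (cases vs)
        case Nil then show ?thesis using a b by auto
      next
        case (Cons v vs') then show ?thesis using a b by auto
      qed
    next
      assume b: "q' @ vs = us \<and> r' = vs @ c # R"
      then show ?thesis using a by auto
    qed
  qed
qed

lemma sum_S3_mid:
  fixes c :: 'a and G :: "'a list \<Rightarrow> 'a list \<Rightarrow> 'a list \<Rightarrow> 'b::comm_monoid_add"
  shows "(\<Sum>(p', q', r')\<in>S3 (P @ [c] @ R). G p' q' r')
   = (\<Sum>(a, q, x)\<in>S3 P. G a q (x @ [c] @ R)) + (\<Sum>(x, q, r)\<in>S3 R. G (P @ [c] @ x) q r)
     + (\<Sum>(p1, p2)\<in>S2 P. \<Sum>(r1, r2)\<in>S2 R. G p1 (p2 @ [c] @ r1) r2)"
proof -
  define f1 where "f1 = (\<lambda>(a :: 'a list, q :: 'a list, x). (a, q, x @ [c] @ R))"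
  define f2 where "f2 = (\<lambda>(x, q :: 'a list, r :: 'a list). (P @ [c] @ x, q, r))"
  define f3 where "f3 = (\<lambda>((p1 :: 'a list, p2), (r1, r2 :: 'a list)). (p1, p2 @ [c] @ r1, r2))"
  define A1 where "A1 = f1 ` S3 P"
  define A2 where "A2 = f2 ` S3 R"
  define A3 where "A3 = f3 ` (S2 P \<times> S2 R)"
  have inj1: "inj_on f1 (S3 P)" unfolding f1_def inj_on_def by auto
  have inj2: "inj_on f2 (S3 R)" unfolding f2_def inj_on_def by auto
  have inj3: "inj_on f3 (S2 P \<times> S2 R)"
  proof (rule inj_onI)
    fix x y assume x: "x \<in> S2 P \<times> S2 R" and y: "y \<in> S2 P \<times> S2 R" and e: "f3 x = f3 y"
    obtain p1 p2 r1 r2 where xe: "x = ((p1, p2), (r1, r2))" by (cases x) auto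
    obtain p1' p2' r1' r2' where ye: "y = ((p1', p2'), (r1', r2'))" by (cases y) auto
    have h: "p1 @ p2 = P" "r1 @ r2 = R" "p1' @ p2' = P" "r1' @ r2' = R" using x y xe ye by auto
    have h2: "p1 = p1'" "p2 @ [c] @ r1 = p2' @ [c] @ r1'" "r2 = r2'" using e xe ye unfolding f3_def by auto
    have "p2 = p2'" using h h2 by auto
    moreover have "r1 = r1'" using h h2 by auto
    ultimately show "x = y" using xe ye h2 by simp
  qed
  have cover: "S3 (P @ [c] @ R) = A1 \<union> A2 \<union> A3"
  proof
    show "S3 (P @ [c] @ R) \<subseteq> A1 \<union> A2 \<union> A3"
    proof
      fix t assume t: "t \<in> S3 (P @ [c] @ R)"
      obtain p' q' r' where te: "t = (p', q', r')" by (cases t) auto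
      have "p' @ q' @ r' = P @ [c] @ R" using t te by simp
      from S3_mid_cases[OF this] show "t \<in> A1 \<union> A2 \<union> A3"
      proof (elim disjE exE conjE)
        fix x assume "P = p' @ q' @ x" "r' = x @ [c] @ R"
        then have "t = f1 (p', q', x)" "(p', q', x) \<in> S3 P" using te unfolding f1_def by auto
        then show ?thesis unfolding A1_def by blast
      next
        fix x assume "p' = P @ [c] @ x" "R = x @ q' @ r'"
        then have "t = f2 (x, q', r')" "(x, q', r') \<in> S3 R" using te unfolding f2_def by auto
        then show ?thesis unfolding A2_def by blast
      next
        fix p2 r1 assume "P = p' @ p2" "R = r1 @ r'" "q' = p2 @ [c] @ r1"
        then have "t = f3 ((p', p2), (r1, r'))" "((p', p2), (r1, r')) \<in> S2 P \<times> S2 R" using te unfolding f3_def by auto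
        then show ?thesis unfolding A3_def by blast
      qed
    qed
  next
    show "A1 \<union> A2 \<union> A3 \<subseteq> S3 (P @ [c] @ R)"
      unfolding A1_def A2_def A3_def f1_def f2_def f3_def by auto
  qed
  have d12: "A1 \<inter> A2 = {}"
  proof -
    { fix t assume "t \<in> A1" "t \<in> A2"
      then obtain a q x x' q' r where "t = (a, q, x @ [c] @ R)" "a @ q @ x = P" "t = (P @ [c] @ x', q', r)"
        unfolding A1_def A2_def f1_def f2_def by auto
      then have False by (metis Pair_inject append_eq_append_conv2 append_self_conv list.distinct(1) append_is_Nil_conv length_append
           le_add1 add.commute add_le_same_cancel1 length_greater_0_conv not_le length_Cons)
    }
    then show ?thesis by blast
  qed
  have d123: "(A1 \<union> A2) \<inter> A3 = {}"
  proof -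
    { fix t assume "t \<in> A1" "t \<in> A3"
      then obtain a q x p1 p2 r1 r2 where "t = (a, q, x @ [c] @ R)" "a @ q @ x = P" "t = (p1, p2 @ [c] @ r1, r2)" "p1 @ p2 = P" "r1 @ r2 = R"
        unfolding A1_def A3_def f1_def f3_def by auto
      then have "length (a @ q) \<le> length P" "length (p1 @ p2 @ [c] @ r1) > length P" "a @ q = p1 @ p2 @ [c] @ r1" by auto
      then have False by simp
    }
    moreover
    { fix t assume "t \<in> A2" "t \<in> A3"
      then obtain x q r p1 p2 r1 r2 where "t = (P @ [c] @ x, q, r)" "t = (p1, p2 @ [c] @ r1, r2)" "p1 @ p2 = P"
        unfolding A2_def A3_def f2_def f3_def by auto
      then have "length p1 \<le> length P" "p1 = P @ [c] @ x" by auto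
      then have False by simp
    }
    ultimately show ?thesis by blast
  qed
  have "(\<Sum>(p', q', r')\<in>S3 (P @ [c] @ R). G p' q' r') = (\<Sum>t\<in>A1 \<union> A2 \<union> A3. case_prod (\<lambda>p'. case_prod (G p')) t)"
    using cover by simp
  also have "\<dots> = (\<Sum>t\<in>A1. case_prod (\<lambda>p'. case_prod (G p')) t) + (\<Sum>t\<in>A2. case_prod (\<lambda>p'. case_prod (G p')) t)
     + (\<Sum>t\<in>A3. case_prod (\<lambda>p'. case_prod (G p')) t)"
    using d12 d123 by (simp add: sum.union_disjoint A1_def A2_def A3_def)
  also have "(\<Sum>t\<in>A1. case_prod (\<lambda>p'. case_prod (G p')) t) = (\<Sum>(a, q, x)\<in>S3 P. G a q (x @ [c] @ R))"
    unfolding A1_def sum.reindex[OF inj1] by (simp add: f1_def case_prod_beta)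
  also have "(\<Sum>t\<in>A2. case_prod (\<lambda>p'. case_prod (G p')) t) = (\<Sum>(x, q, r)\<in>S3 R. G (P @ [c] @ x) q r)"
    unfolding A2_def sum.reindex[OF inj2] by (simp add: f2_def case_prod_beta)
  also have "(\<Sum>t\<in>A3. case_prod (\<lambda>p'. case_prod (G p')) t) = (\<Sum>z\<in>S2 P \<times> S2 R. G (fst (fst z)) (snd (fst z) @ [c] @ fst (snd z)) (snd (snd z)))"
    unfolding A3_def sum.reindex[OF inj3] by (simp add: f3_def case_prod_beta)
  also have "\<dots> = (\<Sum>(p1, p2)\<in>S2 P. \<Sum>(r1, r2)\<in>S2 R. G p1 (p2 @ [c] @ r1) r2)"
    by (simp add: sum.cartesian_product case_prod_beta)
  finally show ?thesis .
qed

abbreviation LL :: "letter set" where "LL \<equiv> {One, Y}"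

lemma sum_LL: "(\<Sum>c\<in>LL. F c) = F One + F Y" by simp

lemma wdeg_Nil[simp]: "wdeg d [] = 0" unfolding wdeg_def by simp
lemma wdeg_Cons[simp]: "wdeg d (x # w) = ldeg d x + wdeg d w" unfolding wdeg_def by simp
lemma wdeg_append[simp]: "wdeg d (u @ v) = wdeg d u + wdeg d v" unfolding wdeg_def by simp

lemma circ2:
  "circ d f g kg w b = (\<Sum>(p, q, r)\<in>S3 w. ksign (kg * wdeg d p) * (\<Sum>c\<in>LL. g q c * f (p @ [c] @ r) b))"
  unfolding circ_S3 by simp

definition par :: "int \<Rightarrow> 'r::comm_ring_1 cod \<Rightarrow> int \<Rightarrow> bool" where
  "par d h kh \<longleftrightarrow> (\<forall>Q c. h Q c \<noteq> 0 \<longrightarrow> even (kh + wdeg d Q - ldeg d c))"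

definition EE :: "int \<Rightarrow> 'r::comm_ring_1 cod \<Rightarrow> 'r cod \<Rightarrow> int \<Rightarrow> 'r cod \<Rightarrow> int \<Rightarrow> 'r cod" where
  "EE d f g kg h kh w b = (\<Sum>(a, q, x, Q, R)\<in>S5 w. ksign (kh * wdeg d (a @ q @ x)) * ksign (kg * wdeg d a) *
      (\<Sum>c\<in>LL. \<Sum>c'\<in>LL. h Q c * g q c' * f (a @ [c'] @ x @ [c] @ R) b))"

lemma alg1:
  fixes x :: "'r::comm_ring_1"
  shows "x * (\<Sum>c\<in>LL. h c * (\<Sum>t\<in>T. G t c)) = (\<Sum>t\<in>T. x * (\<Sum>c\<in>LL. h c * G t c))"
proof -
  have "(\<Sum>c\<in>LL. h c * (\<Sum>t\<in>T. G t c)) = (\<Sum>c\<in>LL. \<Sum>t\<in>T. h c * G t c)"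
    by (simp add: sum_distrib_left)
  also have "\<dots> = (\<Sum>t\<in>T. \<Sum>c\<in>LL. h c * G t c)" by (rule sum.swap)
  finally show ?thesis by (simp add: sum_distrib_left)
qed

lemma alg2:
  fixes x y :: "'r::comm_ring_1"
  shows "x * (\<Sum>c\<in>LL. h c * (y * (\<Sum>c'\<in>LL. g c c' * F c c'))) = x * y * (\<Sum>c\<in>LL. \<Sum>c'\<in>LL. h c * g c c' * F c c')"
  by (simp add: algebra_simps)

lemma par_sign:
  assumes "par d h kh"
  shows "h Q c * ksign (kg * (wdeg d P + ldeg d c + wdeg d x)) = h Q c * (ksign (kg * kh) * ksign (kg * wdeg d (P @ Q @ x)))"
proof (cases "h Q c = 0")
  case False
  then have e: "even (kh + wdeg d Q - ldeg d c)" using assms unfolding par_def by auto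
  have "ksign (kg * (wdeg d P + ldeg d c + wdeg d x)) = (ksign (kg * kh + kg * wdeg d (P @ Q @ x)) :: 'a)"
  proof (rule ksign_cong_even)
    have "kg * (wdeg d P + ldeg d c + wdeg d x) - (kg * kh + kg * wdeg d (P @ Q @ x)) = - kg * (kh + wdeg d Q - ldeg d c)"
      by (simp add: algebra_simps)
    then show "even (kg * (wdeg d P + ldeg d c + wdeg d x) - (kg * kh + kg * wdeg d (P @ Q @ x)))"
      using e by simp
  qed
  then show ?thesis by (simp add: ksign_add)
qed simp

lemma preLie:
  assumes "par d h kh"
  shows "circ d (circ d f g kg) h kh w b = circ d f (circ d g h kh) (kg + kh) w b
     + EE d f g kg h kh w b + ksign (kg * kh) * EE d f h kh g kg w b"
proof -
  define sh where "sh = (\<lambda>P. ksign (kh * wdeg d P) :: 'a)"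
  define sg where "sg = (\<lambda>P. ksign (kg * wdeg d P) :: 'a)"
  define B where "B = (\<lambda>P c R. (\<Sum>(a, q, x)\<in>S3 P. sg a * (\<Sum>c'\<in>LL. g q c' * f (a @ [c'] @ x @ [c] @ R) b)))"
  define A where "A = (\<lambda>P c R. (\<Sum>(x, q, r)\<in>S3 R. sg (P @ [c] @ x) * (\<Sum>c'\<in>LL. g q c' * f (P @ [c] @ x @ [c'] @ r) b)))"
  define N where "N = (\<lambda>P c R. (\<Sum>(p1, p2)\<in>S2 P. \<Sum>(r1, r2)\<in>S2 R. sg p1 * (\<Sum>c'\<in>LL. g (p2 @ [c] @ r1) c' * f (p1 @ [c'] @ r2) b)))"
  have split: "circ d f g kg (P @ [c] @ R) b = B P c R + A P c R + N P c R" for P c R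
    unfolding circ2 B_def A_def N_def sg_def by (subst sum_S3_mid) simp
  have "circ d (circ d f g kg) h kh w b = (\<Sum>(P, Q, R)\<in>S3 w. sh P * (\<Sum>c\<in>LL. h Q c * (B P c R + A P c R + N P c R)))"
    unfolding circ2[of _ "circ d f g kg"] split sh_def by simp
  also have "\<dots> = (\<Sum>(P, Q, R)\<in>S3 w. sh P * (\<Sum>c\<in>LL. h Q c * B P c R))
     + (\<Sum>(P, Q, R)\<in>S3 w. sh P * (\<Sum>c\<in>LL. h Q c * A P c R))
     + (\<Sum>(P, Q, R)\<in>S3 w. sh P * (\<Sum>c\<in>LL. h Q c * N P c R))"
    by (simp add: sum.distrib distrib_left case_prod_beta)
  also have "(\<Sum>(P, Q, R)\<in>S3 w. sh P * (\<Sum>c\<in>LL. h Q c * B P c R)) = EE d f g kg h kh w b"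
  proof -
    have "(\<Sum>(P, Q, R)\<in>S3 w. sh P * (\<Sum>c\<in>LL. h Q c * B P c R))
      = (\<Sum>(P, Q, R)\<in>S3 w. \<Sum>(a, q, x)\<in>S3 P. sh (a @ q @ x) * sg a *
          (\<Sum>c\<in>LL. \<Sum>c'\<in>LL. h Q c * g q c' * f (a @ [c'] @ x @ [c] @ R) b))"
    proof (rule sum.cong[OF refl], clarify)
      fix P Q R assume "(P, Q, R) \<in> S3 w"
      have "sh P * (\<Sum>c\<in>LL. h Q c * B P c R) = (\<Sum>t\<in>S3 P. sh P * (\<Sum>c\<in>LL. h Q c *
          (case t of (a, q, x) \<Rightarrow> sg a * (\<Sum>c'\<in>LL. g q c' * f (a @ [c'] @ x @ [c] @ R) b))))"
        unfolding B_def by (rule alg1)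
      also have "\<dots> = (\<Sum>(a, q, x)\<in>S3 P. sh (a @ q @ x) * sg a *
          (\<Sum>c\<in>LL. \<Sum>c'\<in>LL. h Q c * g q c' * f (a @ [c'] @ x @ [c] @ R) b))"
        by (rule sum.cong[OF refl], clarify) (simp only: alg2, simp)
      finally show "sh P * (\<Sum>c\<in>LL. h Q c * B P c R) = (\<Sum>(a, q, x)\<in>S3 P. sh (a @ q @ x) * sg a *
          (\<Sum>c\<in>LL. \<Sum>c'\<in>LL. h Q c * g q c' * f (a @ [c'] @ x @ [c] @ R) b))" .
    qed
    also have "\<dots> = EE d f g kg h kh w b"
      unfolding EE_def flat1 sh_def sg_def by simp
    finally show ?thesis .
  qed
  also have "(\<Sum>(P, Q, R)\<in>S3 w. sh P * (\<Sum>c\<in>LL. h Q c * A P c R)) = ksign (kg * kh) * EE d f h kh g kg w b"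
  proof -
    have "(\<Sum>(P, Q, R)\<in>S3 w. sh P * (\<Sum>c\<in>LL. h Q c * A P c R))
      = (\<Sum>(P, Q, R)\<in>S3 w. \<Sum>(x, q, r)\<in>S3 R. ksign (kg * kh) * (sh P * sg (P @ Q @ x) *
          (\<Sum>c\<in>LL. \<Sum>c'\<in>LL. h Q c * g q c' * f (P @ [c] @ x @ [c'] @ r) b)))"
    proof (rule sum.cong[OF refl], clarify)
      fix P Q R assume "(P, Q, R) \<in> S3 w"
      have "sh P * (\<Sum>c\<in>LL. h Q c * A P c R) = (\<Sum>t\<in>S3 R. sh P * (\<Sum>c\<in>LL. h Q c *
          (case t of (x, q, r) \<Rightarrow> sg (P @ [c] @ x) * (\<Sum>c'\<in>LL. g q c' * f (P @ [c] @ x @ [c'] @ r) b))))"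
        unfolding A_def by (rule alg1)
      also have "\<dots> = (\<Sum>(x, q, r)\<in>S3 R. ksign (kg * kh) * (sh P * sg (P @ Q @ x) *
          (\<Sum>c\<in>LL. \<Sum>c'\<in>LL. h Q c * g q c' * f (P @ [c] @ x @ [c'] @ r) b)))"
      proof (rule sum.cong[OF refl], clarify)
        fix x q r
        have e: "h Q c * sg (P @ [c] @ x) = h Q c * (ksign (kg * kh) * sg (P @ Q @ x))" for c
          unfolding sg_def using par_sign[OF assms, of Q c kg P x] by (simp add: add.assoc)
        have "sh P * (\<Sum>c\<in>LL. h Q c * (sg (P @ [c] @ x) * (\<Sum>c'\<in>LL. g q c' * f (P @ [c] @ x @ [c'] @ r) b)))
           = sh P * (\<Sum>c\<in>LL. (h Q c * sg (P @ [c] @ x)) * (\<Sum>c'\<in>LL. g q c' * f (P @ [c] @ x @ [c'] @ r) b))"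
          by (simp add: mult.assoc)
        also have "\<dots> = sh P * (\<Sum>c\<in>LL. (h Q c * (ksign (kg * kh) * sg (P @ Q @ x))) * (\<Sum>c'\<in>LL. g q c' * f (P @ [c] @ x @ [c'] @ r) b))"
          by (simp only: e)
        also have "\<dots> = ksign (kg * kh) * (sh P * sg (P @ Q @ x) *
          (\<Sum>c\<in>LL. \<Sum>c'\<in>LL. h Q c * g q c' * f (P @ [c] @ x @ [c'] @ r) b))"
          by (simp add: algebra_simps)
        finally show "sh P * (\<Sum>c\<in>LL. h Q c * (sg (P @ [c] @ x) * (\<Sum>c'\<in>LL. g q c' * f (P @ [c] @ x @ [c'] @ r) b)))
           = ksign (kg * kh) * (sh P * sg (P @ Q @ x) *
          (\<Sum>c\<in>LL. \<Sum>c'\<in>LL. h Q c * g q c' * f (P @ [c] @ x @ [c'] @ r) b))" .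
      qed
      finally show "sh P * (\<Sum>c\<in>LL. h Q c * A P c R) = (\<Sum>(x, q, r)\<in>S3 R. ksign (kg * kh) * (sh P * sg (P @ Q @ x) *
          (\<Sum>c\<in>LL. \<Sum>c'\<in>LL. h Q c * g q c' * f (P @ [c] @ x @ [c'] @ r) b)))" .
    qed
    also have "\<dots> = (\<Sum>(P, Q, x, q, r)\<in>S5 w. ksign (kg * kh) * (sh P * sg (P @ Q @ x) *
          (\<Sum>c\<in>LL. \<Sum>c'\<in>LL. h Q c * g q c' * f (P @ [c] @ x @ [c'] @ r) b)))"
      by (rule flat2)
    also have "\<dots> = ksign (kg * kh) * EE d f h kh g kg w b"
      unfolding EE_def sum_distrib_left sh_def sg_def
      by (rule sum.cong[OF refl], clarify) (simp add: algebra_simps sum.swap[of _ LL LL])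
    finally show ?thesis .
  qed
  also have "(\<Sum>(P, Q, R)\<in>S3 w. sh P * (\<Sum>c\<in>LL. h Q c * N P c R)) = circ d f (circ d g h kh) (kg + kh) w b"
  proof -
    have "(\<Sum>(P, Q, R)\<in>S3 w. sh P * (\<Sum>c\<in>LL. h Q c * N P c R))
      = (\<Sum>(P, Q, R)\<in>S3 w. \<Sum>(p1, p2)\<in>S2 P. \<Sum>(r1, r2)\<in>S2 R. sh (p1 @ p2) * sg p1 *
          (\<Sum>c\<in>LL. \<Sum>c'\<in>LL. h Q c * g (p2 @ [c] @ r1) c' * f (p1 @ [c'] @ r2) b))"
    proof (rule sum.cong[OF refl], clarify)
      fix P Q R assume "(P, Q, R) \<in> S3 w"
      have "sh P * (\<Sum>c\<in>LL. h Q c * N P c R) = (\<Sum>t\<in>S2 P. sh P * (\<Sum>c\<in>LL. h Q c *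
          (case t of (p1, p2) \<Rightarrow> \<Sum>(r1, r2)\<in>S2 R. sg p1 * (\<Sum>c'\<in>LL. g (p2 @ [c] @ r1) c' * f (p1 @ [c'] @ r2) b))))"
        unfolding N_def by (rule alg1)
      also have "\<dots> = (\<Sum>(p1, p2)\<in>S2 P. \<Sum>(r1, r2)\<in>S2 R. sh (p1 @ p2) * sg p1 *
          (\<Sum>c\<in>LL. \<Sum>c'\<in>LL. h Q c * g (p2 @ [c] @ r1) c' * f (p1 @ [c'] @ r2) b))"
      proof (rule sum.cong[OF refl], clarify)
        fix p1 p2 assume P: "(p1, p2) \<in> S2 P"
        have "sh P * (\<Sum>c\<in>LL. h Q c * (\<Sum>(r1, r2)\<in>S2 R. sg p1 * (\<Sum>c'\<in>LL. g (p2 @ [c] @ r1) c' * f (p1 @ [c'] @ r2) b)))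
          = (\<Sum>t\<in>S2 R. sh P * (\<Sum>c\<in>LL. h Q c * (case t of (r1, r2) \<Rightarrow> sg p1 * (\<Sum>c'\<in>LL. g (p2 @ [c] @ r1) c' * f (p1 @ [c'] @ r2) b))))"
          by (rule alg1)
        also have "\<dots> = (\<Sum>(r1, r2)\<in>S2 R. sh (p1 @ p2) * sg p1 *
          (\<Sum>c\<in>LL. \<Sum>c'\<in>LL. h Q c * g (p2 @ [c] @ r1) c' * f (p1 @ [c'] @ r2) b))"
          using P by (intro sum.cong[OF refl], clarify) (simp only: alg2, simp)
        finally show "sh P * (\<Sum>c\<in>LL. h Q c * (\<Sum>(r1, r2)\<in>S2 R. sg p1 * (\<Sum>c'\<in>LL. g (p2 @ [c] @ r1) c' * f (p1 @ [c'] @ r2) b)))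
          = (\<Sum>(r1, r2)\<in>S2 R. sh (p1 @ p2) * sg p1 *
          (\<Sum>c\<in>LL. \<Sum>c'\<in>LL. h Q c * g (p2 @ [c] @ r1) c' * f (p1 @ [c'] @ r2) b))" .
      qed
      finally show "sh P * (\<Sum>c\<in>LL. h Q c * N P c R) = (\<Sum>(p1, p2)\<in>S2 P. \<Sum>(r1, r2)\<in>S2 R. sh (p1 @ p2) * sg p1 *
          (\<Sum>c\<in>LL. \<Sum>c'\<in>LL. h Q c * g (p2 @ [c] @ r1) c' * f (p1 @ [c'] @ r2) b))" .
    qed
    also have "\<dots> = (\<Sum>(p1, p2, Q, r1, r2)\<in>S5 w. sh (p1 @ p2) * sg p1 *
          (\<Sum>c\<in>LL. \<Sum>c'\<in>LL. h Q c * g (p2 @ [c] @ r1) c' * f (p1 @ [c'] @ r2) b))"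
      by (rule flat3)
    also have "\<dots> = (\<Sum>(p1, Q', r2)\<in>S3 w. \<Sum>(p2, Q, r1)\<in>S3 Q'. sh (p1 @ p2) * sg p1 *
          (\<Sum>c\<in>LL. \<Sum>c'\<in>LL. h Q c * g (p2 @ [c] @ r1) c' * f (p1 @ [c'] @ r2) b))"
      by (rule flat4[symmetric])
    also have "\<dots> = circ d f (circ d g h kh) (kg + kh) w b"
      unfolding circ2[of _ f] circ2[of _ g]
    proof (rule sum.cong[OF refl], clarify)
      fix p1 Q' r2
      have "ksign ((kg + kh) * wdeg d p1) * (\<Sum>c'\<in>LL. (\<Sum>(p2, Q, r1)\<in>S3 Q'. ksign (kh * wdeg d p2) * (\<Sum>c\<in>LL. h Q c * g (p2 @ [c] @ r1) c')) * f (p1 @ [c'] @ r2) b)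
        = (\<Sum>c'\<in>LL. \<Sum>(p2, Q, r1)\<in>S3 Q'. ksign ((kg + kh) * wdeg d p1) * ksign (kh * wdeg d p2) * (\<Sum>c\<in>LL. h Q c * g (p2 @ [c] @ r1) c' * f (p1 @ [c'] @ r2) b))"
        by (simp add: sum_distrib_left sum_distrib_right case_prod_beta algebra_simps)
      also have "\<dots> = (\<Sum>(p2, Q, r1)\<in>S3 Q'. \<Sum>c'\<in>LL. ksign ((kg + kh) * wdeg d p1) * ksign (kh * wdeg d p2) * (\<Sum>c\<in>LL. h Q c * g (p2 @ [c] @ r1) c' * f (p1 @ [c'] @ r2) b))"
        by (subst sum.swap) (simp add: case_prod_beta)
      also have "\<dots> = (\<Sum>(p2, Q, r1)\<in>S3 Q'. sh (p1 @ p2) * sg p1 *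
          (\<Sum>c\<in>LL. \<Sum>c'\<in>LL. h Q c * g (p2 @ [c] @ r1) c' * f (p1 @ [c'] @ r2) b))"
      proof (rule sum.cong[OF refl], clarify)
        fix p2 Q r1
        have s: "ksign ((kg + kh) * wdeg d p1) * ksign (kh * wdeg d p2) = (sh (p1 @ p2) * sg p1 :: 'a)"
          unfolding sh_def sg_def by (simp add: distrib_left distrib_right ksign_add algebra_simps)
        show "(\<Sum>c'\<in>LL. ksign ((kg + kh) * wdeg d p1) * ksign (kh * wdeg d p2) * (\<Sum>c\<in>LL. h Q c * g (p2 @ [c] @ r1) c' * f (p1 @ [c'] @ r2) b))
          = sh (p1 @ p2) * sg p1 * (\<Sum>c\<in>LL. \<Sum>c'\<in>LL. h Q c * g (p2 @ [c] @ r1) c' * f (p1 @ [c'] @ r2) b)"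
          unfolding s by (simp add: sum_distrib_left algebra_simps)
      qed
      finally show "(\<Sum>(p2, Q, r1)\<in>S3 Q'. sh (p1 @ p2) * sg p1 *
          (\<Sum>c\<in>LL. \<Sum>c'\<in>LL. h Q c * g (p2 @ [c] @ r1) c' * f (p1 @ [c'] @ r2) b))
        = ksign ((kg + kh) * wdeg d p1) * (\<Sum>c'\<in>LL. (\<Sum>(p2, Q, r1)\<in>S3 Q'. ksign (kh * wdeg d p2) * (\<Sum>c\<in>LL. h Q c * g (p2 @ [c] @ r1) c')) * f (p1 @ [c'] @ r2) b)"
        by simp
    qed
    finally show ?thesis .
  qed
  finally show ?thesis by (simp add: algebra_simps)
qed

lemma ksign_sq2[simp]: "ksign a * (ksign a * x) = (x :: 'r::comm_ring_1)"
  by (simp add: mult.assoc[symmetric])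

lemma circ_outer_diff:
  "circ d (\<lambda>w b. f1 w b - c * f2 w b) g kg w b = circ d f1 g kg w b - c * circ d f2 g kg w b"
  unfolding circ_def by (simp add: sum_subtractf sum_distrib_left algebra_simps)

lemma circ_inner_diff:
  "circ d f (\<lambda>w b. g1 w b - c * g2 w b) kg w b = circ d f g1 kg w b - c * circ d f g2 kg w b"
  unfolding circ_def by (simp add: sum_subtractf sum_distrib_left algebra_simps)

lemma circ_outer_add:
  "circ d (\<lambda>w b. f1 w b + f2 w b) g kg w b = circ d f1 g kg w b + circ d f2 g kg w b"
  unfolding circ_def by (simp add: sum.distrib algebra_simps)

lemma circ_inner_add:
  "circ d f (\<lambda>w b. g1 w b + g2 w b) kg w b = circ d f g1 kg w b + circ d f g2 kg w b"
  unfolding circ_def by (simp add: sum.distrib algebra_simps)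

lemma circ_outer_smult:
  "circ d (\<lambda>w b. c * f1 w b) g kg w b = c * circ d f1 g kg w b"
  unfolding circ_def by (simp add: sum_distrib_left algebra_simps)

lemma circ_inner_smult:
  "circ d f (\<lambda>w b. c * g1 w b) kg w b = c * circ d f g1 kg w b"
  unfolding circ_def by (simp add: sum_distrib_left algebra_simps)

lemma circ_inner_zero:
  "(\<And>w b. g w b = 0) \<Longrightarrow> circ d f g kg w b = 0"
  unfolding circ_def by simp

lemma circ_outer_zero:
  "(\<And>w b. f w b = 0) \<Longrightarrow> circ d f g kg w b = 0"
  unfolding circ_def by simp

lemma hdiff_eq: "hdiff d m k f w b = circ d f m (-1) w b - ksign k * circ d m f k w b"
  unfolding hdiff_def br_def by simp

lemma hdiff_sq:
  assumes pm: "par d m (-1)" and pf: "par d f k" and mm: "\<And>w b. circ d m m (-1) w b = 0"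
  shows "hdiff d m (k - 1) (hdiff d m k f) w b = 0"
proof -
  let ?fm = "circ d f m (-1)" and ?mf = "circ d m f k"
  have df: "hdiff d m k f = (\<lambda>w b. ?fm w b - ksign k * ?mf w b)"
    by (rule ext, rule ext) (simp add: hdiff_eq)
  have A: "circ d ?fm m (-1) w b = 0"
    using preLie[OF pm, of f m "-1" w b] circ_inner_zero[of "circ d m m (-1)", OF mm]
    by simp
  have B: "circ d ?mf m (-1) w b = circ d m ?fm (k - 1) w b + EE d m f k m (-1) w b + ksign k * EE d m m (-1) f k w b"
    using preLie[OF pm, of m f k w b] by (simp add: algebra_simps)
  have C0: "EE d m m (-1) f k w b + (circ d m ?mf (k - 1) w b + ksign k * EE d m f k m (-1) w b) = 0"
    using preLie[OF pf, of m m "-1" w b] circ_outer_zero[of "circ d m m (-1)", OF mm]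
    by (simp add: algebra_simps)
  have C: "circ d m ?mf (k - 1) w b = - EE d m m (-1) f k w b - ksign k * EE d m f k m (-1) w b"
    using C0 by (simp add: eq_neg_iff_add_eq_0 algebra_simps)
  have "hdiff d m (k - 1) (hdiff d m k f) w b
      = circ d (hdiff d m k f) m (-1) w b - ksign (k - 1) * circ d m (hdiff d m k f) (k - 1) w b"
    by (simp add: hdiff_eq)
  also have "\<dots> = (circ d ?fm m (-1) w b - ksign k * circ d ?mf m (-1) w b)
      - ksign (k - 1) * (circ d m ?fm (k - 1) w b - ksign k * circ d m ?mf (k - 1) w b)"
    unfolding df circ_outer_diff circ_inner_diff by simp
  also have "ksign (k - 1) = - (ksign k :: 'a)"
    unfolding ksign_def by auto
  finally show ?thesis unfolding A B C by (simp add: algebra_simps)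
qed




lemma letter_neq_One: "x \<noteq> One \<longleftrightarrow> x = Y" by (cases x) auto
lemma letter_neq_Y: "x \<noteq> Y \<longleftrightarrow> x = One" by (cases x) auto

lemma Yword_eq: "One \<notin> set w \<Longrightarrow> w = replicate (length w) Y"
  by (induction w) (auto simp: letter_neq_One[symmetric])

lemma wdeg_replicate: "wdeg d (replicate n Y) = int n * (d + 2)"
  by (induction n) (auto simp: algebra_simps)

locale moore =
  fixes Rg :: "int \<Rightarrow> 'r::comm_ring_1 set" and d :: int and m :: "'r cod"
  assumes egr: "evenly_graded_ring Rg"
    and ema: "even_moore_algebra Rg d m"
    and nzd: "\<forall>r. r * m [Y] One = 0 \<longrightarrow> r = 0"
begin

lemma d_even: "even d" using ema unfolding even_moore_algebra_def by simp
lemma m_hom: "hom Rg d (-1) m" using ema unfolding even_moore_algebra_def by simp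
lemma mm0: "circ d m m (-1) w b = 0" using ema unfolding even_moore_algebra_def by simp
lemma m_Nil[simp]: "m [] b = 0" using ema unfolding even_moore_algebra_def by simp
lemma m_unitL: "m [One, x] b = (if b = x then 1 else 0)" using ema unfolding even_moore_algebra_def by simp
lemma m_unitR0: "m [x, One] b = ksign (ldeg d x - 1) * (if b = x then 1 else 0)"
  using ema unfolding even_moore_algebra_def by simp
lemma m_One: "length w \<noteq> 2 \<Longrightarrow> One \<in> set w \<Longrightarrow> m w b = 0"
  using ema unfolding even_moore_algebra_def by simp

lemma m_YOne: "m [Y, One] b = (if b = Y then -1 else 0)"
proof -
  have "ksign (ldeg d Y - 1) = (-1 :: 'r)" using d_even by (intro ksign_odd) simp
  then show ?thesis using m_unitR0[of Y b] by simp
qed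

lemma m_OneOne: "m [One, One] b = (if b = One then 1 else 0)" using m_unitL by simp

lemma Rg_zero: "0 \<in> Rg k" using egr unfolding evenly_graded_ring_def by simp
lemma Rg_add: "a \<in> Rg k \<Longrightarrow> b \<in> Rg k \<Longrightarrow> a + b \<in> Rg k" using egr unfolding evenly_graded_ring_def by simp
lemma Rg_uminus: "a \<in> Rg k \<Longrightarrow> - a \<in> Rg k" using egr unfolding evenly_graded_ring_def by simp
lemma Rg_diff: "a \<in> Rg k \<Longrightarrow> b \<in> Rg k \<Longrightarrow> a - b \<in> Rg k"
  using Rg_add[of a k "- b"] Rg_uminus[of b k] by simp
lemma Rg_mult: "a \<in> Rg j \<Longrightarrow> b \<in> Rg k \<Longrightarrow> a * b \<in> Rg (j + k)" using egr unfolding evenly_graded_ring_def by simp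
lemma Rg_one: "1 \<in> Rg 0" using egr unfolding evenly_graded_ring_def by simp
lemma Rg_odd: "odd k \<Longrightarrow> a \<in> Rg k \<Longrightarrow> a = 0" using egr unfolding evenly_graded_ring_def by auto
lemma Rg_cong: "a \<in> Rg j \<Longrightarrow> j = k \<Longrightarrow> a \<in> Rg k" by simp
lemma Rg_sum: "finite A \<Longrightarrow> (\<And>x. x \<in> A \<Longrightarrow> f x \<in> Rg k) \<Longrightarrow> sum f A \<in> Rg k"
  by (induction A rule: finite_induct) (auto intro: Rg_zero Rg_add)
lemma Rg_ksign: "a \<in> Rg k \<Longrightarrow> ksign n * a \<in> Rg k"
  unfolding ksign_def by (auto intro: Rg_uminus)

lemma hom_par: "hom Rg d k f \<Longrightarrow> par d f k"
  unfolding par_def hom_def using Rg_odd by blast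

lemma m_par: "par d m (-1)" using hom_par[OF m_hom] .

lemma hom_odd: "hom Rg d k f \<Longrightarrow> odd (k + wdeg d w - ldeg d b) \<Longrightarrow> f w b = 0"
  unfolding hom_def using Rg_odd by blast

lemma wdeg_Yword: "One \<notin> set w \<Longrightarrow> wdeg d w = int (length w) * (d + 2)"
  by (metis Yword_eq wdeg_replicate)

lemma m_Yout: "One \<notin> set w \<Longrightarrow> m w Y = 0"
  by (rule hom_odd[OF m_hom]) (use d_even in \<open>auto simp: wdeg_Yword\<close>)

definition uu :: "nat \<Rightarrow> 'r" where "uu n = m (replicate n Y) One"

lemma m_Yword: "One \<notin> set w \<Longrightarrow> m w b = (if b = One then uu (length w) else 0)"
  unfolding uu_def using m_Yout[of w] Yword_eq[of w] by (cases b) auto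

lemma ksign_Yword: "One \<notin> set w \<Longrightarrow> ksign (k * wdeg d w) = (1 :: 'r)"
  using d_even by (intro ksign_even) (auto simp: wdeg_Yword)

lemma ldeg_Y_even: "even (ldeg d Y)" using d_even by simp

lemma ksign_dp2[simp]: "ksign (d + 2) = (1 :: 'r)"
  using d_even by (intro ksign_even) simp

lemma ksign_ldegY: "ksign (k * ldeg d Y) = (1 :: 'r)"
  using d_even by (intro ksign_even) simp

lemma circ_hom:
  assumes "hom Rg d kf f" "hom Rg d kg g"
  shows "hom Rg d (kf + kg) (circ d f g kg)"
  unfolding hom_def
proof (intro allI)
  fix w b
  show "circ d f g kg w b \<in> Rg (kf + kg + wdeg d w - ldeg d b)"
    unfolding circ2
  proof (rule Rg_sum, simp, clarify)
    fix p q r assume pqr: "(p, q, r) \<in> S3 w"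
    show "ksign (kg * wdeg d p) * (\<Sum>c\<in>LL. g q c * f (p @ [c] @ r) b) \<in> Rg (kf + kg + wdeg d w - ldeg d b)"
    proof (rule Rg_ksign, rule Rg_sum, simp)
      fix c
      have "g q c \<in> Rg (kg + wdeg d q - ldeg d c)" using assms(2) unfolding hom_def by blast
      moreover have "f (p @ [c] @ r) b \<in> Rg (kf + wdeg d (p @ [c] @ r) - ldeg d b)" using assms(1) unfolding hom_def by blast
      ultimately have "g q c * f (p @ [c] @ r) b \<in> Rg ((kg + wdeg d q - ldeg d c) + (kf + wdeg d (p @ [c] @ r) - ldeg d b))"
        by (rule Rg_mult)
      moreover have "(kg + wdeg d q - ldeg d c) + (kf + wdeg d (p @ [c] @ r) - ldeg d b) = kf + kg + wdeg d w - ldeg d b"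
        using pqr by auto
      ultimately show "g q c * f (p @ [c] @ r) b \<in> Rg (kf + kg + wdeg d w - ldeg d b)" by metis
    qed
  qed
qed

lemma hdiff_hom:
  assumes "hom Rg d k f"
  shows "hom Rg d (k - 1) (hdiff d m k f)"
proof -
  have a: "hom Rg d (k + -1) (circ d f m (-1))" by (rule circ_hom[OF assms m_hom])
  have b: "hom Rg d (-1 + k) (circ d m f k)" by (rule circ_hom[OF m_hom assms])
  show ?thesis unfolding hom_def hdiff_eq
  proof (intro allI)
    fix w b
    have "circ d f m (-1) w b \<in> Rg (k - 1 + wdeg d w - ldeg d b)" using a unfolding hom_def by simp
    moreover have "circ d m f k w b \<in> Rg (k - 1 + wdeg d w - ldeg d b)" using b unfolding hom_def by simp
    ultimately show "circ d f m (-1) w b - ksign k * circ d m f k w b \<in> Rg (k - 1 + wdeg d w - ldeg d b)"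
      by (intro Rg_diff Rg_ksign)
  qed
qed

lemma hdiff_sq': "hom Rg d k f \<Longrightarrow> hdiff d m (k - 1) (hdiff d m k f) w b = 0"
  by (rule hdiff_sq[OF m_par hom_par mm0])

end

section \<open>Insertion and filtrations\<close>

definition ins :: "nat \<Rightarrow> letter list \<Rightarrow> letter list" where
  "ins p v = take p v @ One # drop p v"

definition sins :: "nat \<Rightarrow> 'r::comm_ring_1 cod \<Rightarrow> 'r cod" where
  "sins p g = (\<lambda>v b. if p \<le> length v then g (ins p v) b else 0)"

definition Fp :: "'r::comm_ring_1 cod \<Rightarrow> nat \<Rightarrow> bool" where
  "Fp g p \<longleftrightarrow> (\<forall>q c. One \<in> set (take p q) \<longrightarrow> g q c = 0)"

definition Nn :: "'r::comm_ring_1 cod \<Rightarrow> bool" where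
  "Nn g \<longleftrightarrow> (\<forall>q c. One \<in> set q \<longrightarrow> g q c = 0)"

lemma ins_0[simp]: "ins 0 v = One # v" unfolding ins_def by simp
lemma ins_Suc_Cons[simp]: "ins (Suc p) (x # v) = x # ins p v" unfolding ins_def by simp
lemma length_ins[simp]: "length (ins p v) = Suc (length v)" unfolding ins_def by simp
lemma ins_ne[simp]: "ins p v \<noteq> []" unfolding ins_def by simp
lemma One_in_ins[simp]: "One \<in> set (ins p v)" unfolding ins_def by simp
lemma wdeg_ins[simp]: "wdeg d (ins p v) = wdeg d v + 1"
proof -
  have "wdeg d v = wdeg d (take p v @ drop p v)" by simp
  then show ?thesis unfolding ins_def by (simp only: wdeg_append wdeg_Cons) simp
qed
lemma ins_rep: "ins p (replicate p Y @ z) = replicate p Y @ One # z" unfolding ins_def by simp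

lemma sins_Y: "(\<lambda>v b. sins (Suc p) g (Y # v) b) = sins p (\<lambda>v b. g (Y # v) b)"
  unfolding sins_def by (intro ext) simp

lemma Fp_Y: "Fp g (Suc p) \<Longrightarrow> Fp (\<lambda>v b. g (Y # v) b) p"
  unfolding Fp_def by simp

lemma Fp_One: "Fp g (Suc p) \<Longrightarrow> g (One # v) b = 0"
  unfolding Fp_def by simp

lemma Fp_sins: "Fp g p \<Longrightarrow> Fp (sins p g) p"
  unfolding Fp_def sins_def ins_def by auto

lemma Nn_Fp: "Nn g \<Longrightarrow> Fp g p"
  unfolding Nn_def Fp_def by (meson in_set_takeD)

lemma take_Suc_ins: "One \<in> set (take (Suc p) (ins p v))"
  unfolding ins_def by (cases "p \<le> length v") (auto simp: min_def)

lemma ksign_diff: "ksign (a - b) = (ksign a * ksign b :: 'r::comm_ring_1)"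
  using ksign_add[of a "- b"] by simp

lemma S2_Nil: "S2 [] = {([], [])}" unfolding S2_def by auto
lemma S3_Nil: "S3 [] = {([], [], [])}" unfolding S3_def by auto

lemma S2_Cons_sum:
  fixes x :: 'a
  shows "(\<Sum>(q, r)\<in>S2 (x # v). G q r) = G [] (x # v) + (\<Sum>(q, r)\<in>S2 v. G (x # q) r)"
proof -
  have e: "S2 (x # v) = insert ([], x # v) ((\<lambda>(q, r). (x # q, r)) ` S2 v)"
  proof (rule set_eqI)
    fix t :: "'a list \<times> 'a list"
    obtain q r where t: "t = (q, r)" by (cases t)
    show "t \<in> S2 (x # v) \<longleftrightarrow> t \<in> insert ([], x # v) ((\<lambda>(q, r). (x # q, r)) ` S2 v)"
      unfolding t by (cases q) (auto simp: image_iff intro!: bexI[where x = "(tl q, r)"])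
  qed
  have inj: "inj_on (\<lambda>(q, r). (x # q, r)) (S2 v)" unfolding inj_on_def by auto
  have ni: "([], x # v) \<notin> (\<lambda>(q, r). (x # q, r)) ` S2 v" by auto
  have "(\<Sum>(q, r)\<in>S2 (x # v). G q r) = (\<lambda>(q, r). G q r) ([], x # v) + sum (\<lambda>(q, r). G q r) ((\<lambda>(q, r). (x # q, r)) ` S2 v)"
    unfolding e by (rule sum.insert) (use ni in auto)
  also have "sum (\<lambda>(q, r). G q r) ((\<lambda>(q, r). (x # q, r)) ` S2 v) = sum ((\<lambda>(q, r). G q r) \<circ> (\<lambda>(q, r). (x # q, r))) (S2 v)"
    by (rule sum.reindex[OF inj])
  finally show ?thesis by (simp add: comp_def case_prod_beta)
qed

lemma S3_Cons_sum:
  fixes x :: 'a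
  shows "(\<Sum>(p, q, r)\<in>S3 (x # v). G p q r) = (\<Sum>(q, r)\<in>S2 (x # v). G [] q r) + (\<Sum>(p, q, r)\<in>S3 v. G (x # p) q r)"
proof -
  have e: "S3 (x # v) = ((\<lambda>(q, r). ([], q, r)) ` S2 (x # v)) \<union> ((\<lambda>(p, q, r). (x # p, q, r)) ` S3 v)"
  proof (rule set_eqI)
    fix t :: "'a list \<times> 'a list \<times> 'a list"
    obtain p q r where t: "t = (p, q, r)" by (cases t)
    show "t \<in> S3 (x # v) \<longleftrightarrow> t \<in> ((\<lambda>(q, r). ([], q, r)) ` S2 (x # v)) \<union> ((\<lambda>(p, q, r). (x # p, q, r)) ` S3 v)"
      unfolding t by (cases p) (auto simp: image_iff intro!: bexI[where x = "(tl p, q, r)"])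
  qed
  have inj1: "inj_on (\<lambda>(q, r). ([], q, r)) (S2 (x # v))" unfolding inj_on_def by auto
  have inj2: "inj_on (\<lambda>(p, q, r). (x # p, q, r)) (S3 v)" unfolding inj_on_def by auto
  have d: "((\<lambda>(q, r). ([], q, r)) ` S2 (x # v)) \<inter> ((\<lambda>(p, q, r). (x # p, q, r)) ` S3 v) = {}" by auto
  have "(\<Sum>(p, q, r)\<in>S3 (x # v). G p q r) = sum (\<lambda>(p, q, r). G p q r) ((\<lambda>(q, r). ([], q, r)) ` S2 (x # v))
     + sum (\<lambda>(p, q, r). G p q r) ((\<lambda>(p, q, r). (x # p, q, r)) ` S3 v)"
    unfolding e by (rule sum.union_disjoint) (use d in auto)
  also have "sum (\<lambda>(p, q, r). G p q r) ((\<lambda>(q, r). ([], q, r)) ` S2 (x # v)) = sum ((\<lambda>(p, q, r). G p q r) \<circ> (\<lambda>(q, r). ([], q, r))) (S2 (x # v))"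
    by (rule sum.reindex[OF inj1])
  also have "sum (\<lambda>(p, q, r). G p q r) ((\<lambda>(p, q, r). (x # p, q, r)) ` S3 v) = sum ((\<lambda>(p, q, r). G p q r) \<circ> (\<lambda>(p, q, r). (x # p, q, r))) (S3 v)"
    by (rule sum.reindex[OF inj2])
  finally show ?thesis by (simp add: comp_def case_prod_beta)
qed

lemma S2_only_Nil:
  assumes "\<And>q r. q \<noteq> [] \<Longrightarrow> H q r = 0"
  shows "(\<Sum>(q, r)\<in>S2 v. H q r) = H [] v"
proof (cases v)
  case Nil then show ?thesis by (simp add: S2_Nil)
next
  case (Cons x v')
  then show ?thesis using assms by (simp add: S2_Cons_sum)
qed

context moore
begin

lemma Cm_Cons:
  "circ d G m (-1) (x # v) b = (\<Sum>(q, r)\<in>S2 v. \<Sum>c\<in>LL. m (x # q) c * G (c # r) b)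
     + ksign (ldeg d x) * circ d (\<lambda>v b. G (x # v) b) m (-1) v b"
proof -
  have "circ d G m (-1) (x # v) b = (\<Sum>(q, r)\<in>S2 (x # v). ksign (- 1 * wdeg d []) * (\<Sum>c\<in>LL. m q c * G ([] @ [c] @ r) b))
      + (\<Sum>(p, q, r)\<in>S3 v. ksign (- 1 * wdeg d (x # p)) * (\<Sum>c\<in>LL. m q c * G ((x # p) @ [c] @ r) b))"
    unfolding circ2 by (rule S3_Cons_sum)
  also have "(\<Sum>(q, r)\<in>S2 (x # v). ksign (- 1 * wdeg d []) * (\<Sum>c\<in>LL. m q c * G ([] @ [c] @ r) b))
     = (\<Sum>(q, r)\<in>S2 v. \<Sum>c\<in>LL. m (x # q) c * G (c # r) b)"
    by (simp add: S2_Cons_sum)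
  also have "(\<Sum>(p, q, r)\<in>S3 v. ksign (- 1 * wdeg d (x # p)) * (\<Sum>c\<in>LL. m q c * G ((x # p) @ [c] @ r) b))
     = ksign (ldeg d x) * circ d (\<lambda>v b. G (x # v) b) m (-1) v b"
    unfolding circ2 sum_distrib_left
    by (rule sum.cong[OF refl]) (auto simp: ksign_diff distrib_left)
  finally show ?thesis .
qed

lemma W1:
  "(\<Sum>(q, r)\<in>S2 v. \<Sum>c\<in>LL. m (One # q) c * G (c # r) b) = (if v = [] then 0 else G v b)"
proof (cases v)
  case Nil
  then show ?thesis by (simp add: S2_Nil m_One)
next
  case (Cons y v')
  have "(\<Sum>(q, r)\<in>S2 v'. \<Sum>c\<in>LL. m (One # y # q) c * G (c # r) b) = (\<Sum>c\<in>LL. m [One, y] c * G (c # v') b)"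
    by (rule S2_only_Nil) (simp add: m_One)
  also have "\<dots> = G (y # v') b" by (cases y) (auto simp: m_unitL)
  finally show ?thesis using Cons by (simp add: S2_Cons_sum m_One)
qed

lemma W2:
  assumes "\<And>r. G (One # r) b = 0"
  shows "(\<Sum>(q, r)\<in>S2 v. \<Sum>c\<in>LL. m (Y # q) c * G (c # r) b) = (if v \<noteq> [] \<and> hd v = One then - G (Y # tl v) b else 0)"
proof -
  have t: "(\<Sum>c\<in>LL. m (Y # q) c * G (c # r) b) = (if q = [One] then - G (Y # r) b else 0)" for q r
  proof -
    have "m (Y # q) Y = (if q = [One] then -1 else 0)"
    proof (cases "One \<in> set q")
      case True
      then show ?thesis
      proof (cases "q = [One]")
        case True then show ?thesis by (simp add: m_YOne)
      next
        case False
        then have "length (Y # q) \<noteq> 2" using \<open>One \<in> set q\<close> by (cases q) (auto simp: letter_neq_One)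
        then show ?thesis using m_One[of "Y # q" Y] \<open>One \<in> set q\<close> False by simp
      qed
    next
      case False
      then show ?thesis using m_Yout[of "Y # q"] by auto
    qed
    then show ?thesis using assms by simp
  qed
  show ?thesis
  proof (cases v)
    case Nil then show ?thesis by (simp add: S2_Nil t)
  next
    case (Cons y v')
    have "(\<Sum>(q, r)\<in>S2 v'. (if y # q = [One] then - G (Y # r) b else 0)) = (if [y] = [One] then - G (Y # v') b else 0)"
      by (rule S2_only_Nil) auto
    then show ?thesis using Cons by (simp add: S2_Cons_sum t)
  qed
qed

lemma C1_Cm:
  assumes "Fp g p"
  shows "circ d (sins p g) m (-1) (replicate p Y @ One # z) b + circ d g m (-1) (replicate p Y @ One # One # z) b
     = (if p = 0 then 1 else -1) * g (replicate p Y @ One # z) b"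
  using assms
proof (induction p arbitrary: g)
  case 0
  have s1: "(\<lambda>v b. sins 0 g (One # v) b) = (\<lambda>v b. g (One # One # v) b)" unfolding sins_def by simp
  have "circ d (sins 0 g) m (-1) (One # z) b = (if z = [] then 0 else g (One # z) b) - circ d (\<lambda>v b. g (One # One # v) b) m (-1) z b"
    unfolding Cm_Cons W1 s1 by (simp add: sins_def)
  moreover have "circ d g m (-1) (One # One # z) b = g (One # z) b - ((if z = [] then 0 else g (One # z) b) - circ d (\<lambda>v b. g (One # One # v) b) m (-1) z b)"
    unfolding Cm_Cons[of g One] W1 Cm_Cons[of "\<lambda>v b. g (One # v) b" One] W1[where G = "\<lambda>v b. g (One # v) b"] by simp
  ultimately show ?case by simp
next
  case (Suc p)
  have F: "Fp (\<lambda>v b. g (Y # v) b) p" using Fp_Y[OF Suc.prems] .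
  have z1: "sins (Suc p) g (One # r) b = 0" for r
    unfolding sins_def using Fp_One[OF Suc.prems] by simp
  have z2: "g (One # r) b = 0" for r using Fp_One[OF Suc.prems] .
  have IH: "circ d (sins p (\<lambda>v b. g (Y # v) b)) m (-1) (replicate p Y @ One # z) b
      + circ d (\<lambda>v b. g (Y # v) b) m (-1) (replicate p Y @ One # One # z) b
     = (if p = 0 then 1 else -1) * g (Y # replicate p Y @ One # z) b"
    using Suc.IH[OF F] by simp
  have a: "circ d (sins (Suc p) g) m (-1) (Y # replicate p Y @ One # z) b
     = (if p = 0 then - g (Y # One # z) b else 0) + circ d (sins p (\<lambda>v b. g (Y # v) b)) m (-1) (replicate p Y @ One # z) b"
    unfolding Cm_Cons W2[where G = "sins (Suc p) g", OF z1] sins_Y ksign_ldegY[of 1, simplified]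
    by (cases p) (auto simp: sins_def ins_def)
  have b: "circ d g m (-1) (Y # replicate p Y @ One # One # z) b
     = (if p = 0 then - g (Y # One # z) b else 0) + circ d (\<lambda>v b. g (Y # v) b) m (-1) (replicate p Y @ One # One # z) b"
    unfolding Cm_Cons[of g Y] W2[where G = g, OF z2] ksign_ldegY[of 1, simplified]
    by (cases p) auto
  have "circ d (sins (Suc p) g) m (-1) (replicate (Suc p) Y @ One # z) b + circ d g m (-1) (replicate (Suc p) Y @ One # One # z) b
     = (if p = 0 then - g (Y # One # z) b else 0) + (if p = 0 then - g (Y # One # z) b else 0)
       + (circ d (sins p (\<lambda>v b. g (Y # v) b)) m (-1) (replicate p Y @ One # z) b
      + circ d (\<lambda>v b. g (Y # v) b) m (-1) (replicate p Y @ One # One # z) b)"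
    using a b by (simp add: algebra_simps)
  also have "\<dots> = (if p = 0 then - g (Y # One # z) b else 0) + (if p = 0 then - g (Y # One # z) b else 0)
       + (if p = 0 then 1 else -1) * g (Y # replicate p Y @ One # z) b" unfolding IH ..
  finally show ?case by (cases p) (simp_all add: algebra_simps)
qed

lemma C2_Cm:
  assumes "Fp g p" "One \<in> set (take p w)" "p \<le> length w"
  shows "circ d (sins p g) m (-1) w b + circ d g m (-1) (ins p w) b
     = (if hd w = One then sins p g (tl w) b else 0)"
  using assms
proof (induction p arbitrary: g w)
  case 0 then show ?case by simp
next
  case (Suc p)
  obtain x v where w: "w = x # v" using Suc.prems(2) by (cases w) auto
  show ?case
  proof (cases x)
    case One
    have z0: "(\<lambda>v' b. sins (Suc p) g (One # v') b) = (\<lambda>v' b. 0)"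
      unfolding sins_def using Fp_One[OF Suc.prems(1)] by (intro ext) simp
    have z1: "(\<lambda>v' b. g (One # v') b) = (\<lambda>v' b. 0)"
      using Fp_One[OF Suc.prems(1)] by (intro ext) simp
    have g0: "g (ins p v) b = 0"
      using Suc.prems(1) take_Suc_ins[of p v] unfolding Fp_def by blast
    have "circ d (sins (Suc p) g) m (-1) (One # v) b = (if v = [] then 0 else sins (Suc p) g v b)"
      unfolding Cm_Cons W1 z0 by (simp add: circ_outer_zero)
    moreover have "circ d g m (-1) (ins (Suc p) (One # v)) b = 0"
      unfolding ins_Suc_Cons Cm_Cons[of g One] W1 z1 using g0 by (simp add: circ_outer_zero)
    ultimately show ?thesis using w One by (simp add: sins_def)
  next
    case Y
    have t: "One \<in> set (take p v)" "p \<le> length v" using Suc.prems w Y by auto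
    then have p0: "p \<noteq> 0" by (cases p) auto
    have v0: "v \<noteq> []" using t by auto
    have F: "Fp (\<lambda>v b. g (Y # v) b) p" using Fp_Y[OF Suc.prems(1)] .
    have z1: "sins (Suc p) g (One # r) b = 0" for r
      unfolding sins_def using Fp_One[OF Suc.prems(1)] by simp
    have z2: "g (One # r) b = 0" for r using Fp_One[OF Suc.prems(1)] .
    have IH: "circ d (sins p (\<lambda>v b. g (Y # v) b)) m (-1) v b + circ d (\<lambda>v b. g (Y # v) b) m (-1) (ins p v) b
       = (if hd v = One then sins p (\<lambda>v b. g (Y # v) b) (tl v) b else 0)"
      using Suc.IH[OF F t] .
    have hv: "hd (ins p v) = hd v" using p0 v0 by (cases v; cases p) auto
    have g0: "hd v = One \<Longrightarrow> g (Y # tl (ins p v)) b = 0"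
    proof -
      assume "hd v = One"
      then obtain v' where "v = One # v'" using v0 by (cases v) auto
      then have "tl (ins p v) = ins (p - 1) v'" using p0 by (cases p) auto
      moreover have "One \<in> set (take (Suc p) (Y # ins (p - 1) v'))"
        using take_Suc_ins[of "p - 1" v'] p0 by (cases p) auto
      ultimately show "g (Y # tl (ins p v)) b = 0" using Suc.prems(1) unfolding Fp_def by metis
    qed
    have "circ d (sins (Suc p) g) m (-1) (Y # v) b + circ d g m (-1) (ins (Suc p) (Y # v)) b
      = (if hd v = One then - sins (Suc p) g (Y # tl v) b else 0)
        + (if hd (ins p v) = One then - g (Y # tl (ins p v)) b else 0)
        + (circ d (sins p (\<lambda>v b. g (Y # v) b)) m (-1) v b + circ d (\<lambda>v b. g (Y # v) b) m (-1) (ins p v) b)"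
      unfolding ins_Suc_Cons Cm_Cons[of _ Y] W2[where G = "sins (Suc p) g", OF z1] W2[where G = g, OF z2] sins_Y ksign_ldegY[of 1, simplified]
      using v0 by simp
    also have "\<dots> = 0" unfolding IH hv using g0 by (simp add: sins_Y[symmetric])
    finally show ?thesis using w Y by simp
  qed
qed

end




context moore
begin

definition T2 :: "'r cod \<Rightarrow> int \<Rightarrow> letter list \<Rightarrow> letter \<Rightarrow> 'r" where
  "T2 G k W b = (if W = [] then 0 else
     ksign (k * ldeg d (hd W)) * (\<Sum>c\<in>LL. G (tl W) c * m [hd W, c] b)
     + (\<Sum>c\<in>LL. G (butlast W) c * m [c, last W] b))"

definition YS :: "'r cod \<Rightarrow> letter list \<Rightarrow> letter \<Rightarrow> 'r" where
  "YS G W b = (if b = One then (\<Sum>(P, Q, R)\<in>S3 W.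
     if One \<notin> set P \<and> One \<notin> set R \<and> length P + length R \<noteq> 1 then G Q Y * uu (length P + length R + 1) else 0) else 0)"

lemma sum_S3_len1:
  "(\<Sum>(P, Q, R)\<in>S3 W. if length P + length R = 1 then X P Q R else 0)
   = (if W = [] then 0 else X [hd W] (tl W) [] + X [] (butlast W) [last W])"
proof (cases "W = []")
  case True
  then show ?thesis by (simp add: S3_Nil)
next
  case False
  define D where "D = {([hd W], tl W, []), ([], butlast W, [last W])}"
  have D: "D \<subseteq> S3 W" unfolding D_def using False by auto
  have z: "\<forall>t\<in>S3 W - D. (case t of (P, Q, R) \<Rightarrow> if length P + length R = 1 then X P Q R else 0) = 0"
  proof
    fix t assume t: "t \<in> S3 W - D"
    obtain P Q R where te: "t = (P, Q, R)" by (cases t)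
    have W: "P @ Q @ R = W" using t te by simp
    have "\<not> (length P + length R = 1)"
    proof
      assume l: "length P + length R = 1"
      then consider "length P = 1" "R = []" | "P = []" "length R = 1" by (force simp: add_is_1)
      then show False
      proof cases
        case 1
        then obtain x where "P = [x]" by (cases P) auto
        then have "t = ([hd W], tl W, [])" using W te 1 by auto
        then show False using t unfolding D_def by auto
      next
        case 2
        then obtain y where "R = [y]" by (cases R) auto
        then have "t = ([], butlast W, [last W])" using W te 2 by (auto simp: butlast_append)
        then show False using t unfolding D_def by auto
      qed
    qed
    then show "(case t of (P, Q, R) \<Rightarrow> if length P + length R = 1 then X P Q R else 0) = 0" using te by simp
  qed
  have "(\<Sum>(P, Q, R)\<in>S3 W. if length P + length R = 1 then X P Q R else 0)
       = (\<Sum>(P, Q, R)\<in>D. if length P + length R = 1 then X P Q R else 0)"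
    by (rule sum.mono_neutral_right[OF finite_S3 D z])
  also have "\<dots> = X [hd W] (tl W) [] + X [] (butlast W) [last W]"
    unfolding D_def using False by simp
  finally show ?thesis using False by simp
qed

lemma Mc_formula: "circ d m G k W b = T2 G k W b + YS G W b"
proof -
  define X where "X = (\<lambda>P Q R. ksign (k * wdeg d P) * (\<Sum>c\<in>LL. G Q c * m (P @ [c] @ R) b))"
  have "circ d m G k W b = (\<Sum>(P, Q, R)\<in>S3 W. X P Q R)" unfolding circ2 X_def ..
  also have "\<dots> = (\<Sum>(P, Q, R)\<in>S3 W. (if length P + length R = 1 then X P Q R else 0)
        + (if length P + length R \<noteq> 1 then X P Q R else 0))"
    by (rule sum.cong) auto
  also have "\<dots> = (\<Sum>(P, Q, R)\<in>S3 W. if length P + length R = 1 then X P Q R else 0)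
        + (\<Sum>(P, Q, R)\<in>S3 W. if length P + length R \<noteq> 1 then X P Q R else 0)"
    by (simp add: sum.distrib case_prod_beta)
  also have "(\<Sum>(P, Q, R)\<in>S3 W. if length P + length R = 1 then X P Q R else 0) = T2 G k W b"
    unfolding sum_S3_len1 T2_def X_def by simp
  also have "(\<Sum>(P, Q, R)\<in>S3 W. if length P + length R \<noteq> 1 then X P Q R else 0) = YS G W b"
  proof (cases "b = One")
    case True
    have pt: "(if length P + length R \<noteq> 1 then X P Q R else 0) =
          (if One \<notin> set P \<and> One \<notin> set R \<and> length P + length R \<noteq> 1 then G Q Y * uu (length P + length R + 1) else 0)" for P Q R
      proof (cases "length P + length R \<noteq> 1")
        case l: True
        have l2: "length (P @ [c] @ R) \<noteq> 2" for c using l by simp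
        have mO: "m (P @ [One] @ R) b = 0" using m_One[OF l2] by simp
        show ?thesis
        proof (cases "One \<in> set P \<or> One \<in> set R")
          case True
          have "m (P @ [Y] @ R) b = 0" using m_One[OF l2] True by auto
          then show ?thesis using True mO l unfolding X_def by auto
        next
          case False
          have "m (P @ [Y] @ R) b = uu (length P + length R + 1)"
            using m_Yword[of "P @ [Y] @ R" b] False \<open>b = One\<close> by simp
          moreover have "ksign (k * wdeg d P) = (1 :: 'r)" using ksign_Yword False by simp
          ultimately show ?thesis using False mO l unfolding X_def by simp
        qed
      qed simp
    have "YS G W b = (\<Sum>(P, Q, R)\<in>S3 W.
     if One \<notin> set P \<and> One \<notin> set R \<and> length P + length R \<noteq> 1 then G Q Y * uu (length P + length R + 1) else 0)"
      by (simp only: YS_def True if_True simp_thms)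
    then show ?thesis by (simp only:) (rule sum.cong[OF refl], clarify, rule pt)
  next
    case False
    then have b: "b = Y" by (cases b) auto
    have "X P Q R = 0" if "length P + length R \<noteq> 1" for P Q R
    proof -
      have l2: "length (P @ [c] @ R) \<noteq> 2" for c using that by simp
      have "m (P @ [c] @ R) Y = 0" for c
        by (cases "One \<in> set (P @ [c] @ R)") (use m_One[OF l2] m_Yout in auto)
      then show ?thesis unfolding X_def b by simp
    qed
    then have "(\<Sum>(P, Q, R)\<in>S3 W. if length P + length R \<noteq> 1 then X P Q R else 0) = 0"
      by (intro sum.neutral) auto
    then show ?thesis unfolding YS_def using False by simp
  qed
  finally show ?thesis .
qed

lemma S2_index: "(\<Sum>(Q, R)\<in>S2 W. F Q R) = (\<Sum>i\<le>length W. F (take i W) (drop i W))"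
proof -
  have "(\<Sum>i\<le>length W. F (take i W) (drop i W)) = (\<Sum>(Q, R)\<in>S2 W. F Q R)"
    by (rule sum.reindex_bij_witness[where j = "\<lambda>i. (take i W, drop i W)" and i = "\<lambda>(Q, R). length Q"]) auto
  then show ?thesis by simp
qed

lemma take_One_lemma:
  assumes "One \<in> set (take (Suc p) (P @ Q @ R))" "P \<noteq> []" "One \<notin> set P" "One \<notin> set R"
  shows "One \<in> set (take p Q)"
proof -
  have "One \<notin> set (take (Suc p) P)" using assms(3) in_set_takeD by metis
  then have "One \<in> set (take (Suc p - length P) (Q @ R))" using assms(1) by (simp add: take_append)
  moreover have "Suc p - length P \<le> p" using assms(2) by (cases P) auto
  ultimately have "One \<in> set (take p (Q @ R))"
    by (metis (no_types, lifting) in_set_takeD order.refl set_take_subset_set_take subsetD)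
  then show ?thesis using assms(4) by (auto simp: take_append dest: in_set_takeD)
qed

lemma YS_P0:
  assumes F: "Fp G p" and W: "One \<in> set (take (Suc p) W)"
  shows "YS G W b = (if b = One then (\<Sum>(Q, R)\<in>S2 W. if One \<notin> set R \<and> length R \<noteq> 1 then G Q Y * uu (length R + 1) else 0) else 0)"
proof -
  obtain x v where Wx: "W = x # v" using W by (cases W) auto
  have z: "(\<Sum>(P, Q, R)\<in>S3 v. if One \<notin> set (x # P) \<and> One \<notin> set R \<and> length (x # P) + length R \<noteq> 1
      then G Q Y * uu (length (x # P) + length R + 1) else 0) = 0"
  proof (rule sum.neutral, clarify)
    fix P Q R assume "(P, Q, R) \<in> S3 v"
    then have e: "(x # P) @ Q @ R = W" using Wx by simp
    show "(if One \<notin> set (x # P) \<and> One \<notin> set R \<and> length (x # P) + length R \<noteq> 1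
      then G Q Y * uu (length (x # P) + length R + 1) else 0) = 0"
    proof (cases "One \<notin> set (x # P) \<and> One \<notin> set R")
      case True
      then have "One \<in> set (take p Q)" using take_One_lemma[of p "x # P" Q R] W e by auto
      then show ?thesis using F unfolding Fp_def by auto
    qed auto
  qed
  show ?thesis unfolding YS_def Wx S3_Cons_sum z by (simp add: case_prod_beta cong: if_cong)
qed

lemma take_Suc_ins_ge: "p \<le> j \<Longrightarrow> j \<le> length w \<Longrightarrow> take (Suc j) (ins p w) = ins p (take j w)"
  unfolding ins_def by (simp add: take_append min_def take_drop Suc_diff_le)

lemma drop_Suc_ins_ge: "p \<le> j \<Longrightarrow> j \<le> length w \<Longrightarrow> drop (Suc j) (ins p w) = drop j w"
  unfolding ins_def by (simp add: drop_append min_def Suc_diff_le)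

lemma drop_ins_le: "i \<le> p \<Longrightarrow> p \<le> length w \<Longrightarrow> One \<in> set (drop i (ins p w))"
  unfolding ins_def by (simp add: drop_append min_def)

lemma S2_ins_compare:
  assumes pw: "p \<le> length w"
    and z1: "\<And>i. i \<le> p \<Longrightarrow> FI (take i (ins p w)) (drop i (ins p w)) = 0"
    and z2: "\<And>j. j < p \<Longrightarrow> FW (take j w) (drop j w) = 0"
    and e: "\<And>j. p \<le> j \<Longrightarrow> j \<le> length w \<Longrightarrow> FW (take j w) (drop j w) = FI (ins p (take j w)) (drop j w)"
  shows "(\<Sum>(Q, R)\<in>S2 w. FW Q R) = (\<Sum>(Q, R)\<in>S2 (ins p w). FI Q R)"
proof -
  have "(\<Sum>(Q, R)\<in>S2 w. FW Q R) = (\<Sum>j\<le>length w. FW (take j w) (drop j w))" by (rule S2_index)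
  also have "\<dots> = (\<Sum>j\<in>{p..length w}. FW (take j w) (drop j w))"
    by (rule sum.mono_neutral_right) (use z2 in auto)
  also have "\<dots> = (\<Sum>j\<in>{p..length w}. FI (take (Suc j) (ins p w)) (drop (Suc j) (ins p w)))"
    by (rule sum.cong[OF refl]) (simp add: e take_Suc_ins_ge drop_Suc_ins_ge)
  also have "\<dots> = (\<Sum>i\<in>Suc ` {p..length w}. FI (take i (ins p w)) (drop i (ins p w)))"
  proof -
    have inj: "inj_on Suc {p..length w}" by simp
    show ?thesis unfolding sum.reindex[OF inj] comp_def by (rule refl)
  qed
  also have "\<dots> = (\<Sum>i\<le>length (ins p w). FI (take i (ins p w)) (drop i (ins p w)))"
  proof (rule sum.mono_neutral_left)
    show "Suc ` {p..length w} \<subseteq> {..length (ins p w)}" by auto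
    show "\<forall>i\<in>{..length (ins p w)} - Suc ` {p..length w}. FI (take i (ins p w)) (drop i (ins p w)) = 0"
    proof
      fix i assume i: "i \<in> {..length (ins p w)} - Suc ` {p..length w}"
      have "i \<le> p"
      proof (rule ccontr)
        assume "\<not> i \<le> p"
        then have "i = Suc (i - 1)" "p \<le> i - 1" "i - 1 \<le> length w" using i by auto
        then show False using i by (metis DiffD2 atLeastAtMost_iff image_eqI)
      qed
      then show "FI (take i (ins p w)) (drop i (ins p w)) = 0" by (rule z1)
    qed
  qed simp
  also have "\<dots> = (\<Sum>(Q, R)\<in>S2 (ins p w). FI Q R)" by (rule S2_index[symmetric])
  finally show ?thesis .
qed

lemma YS_ins:
  assumes F: "Fp g p" and W: "One \<in> set (take (Suc p) w)" and pw: "p \<le> length w"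
  shows "YS (sins p g) w b = YS g (ins p w) b"
proof -
  have W': "One \<in> set (take (Suc p) (ins p w))" by (rule take_Suc_ins)
  have S: "(\<Sum>(Q, R)\<in>S2 w. if One \<notin> set R \<and> length R \<noteq> 1 then sins p g Q Y * uu (length R + 1) else 0)
      = (\<Sum>(Q, R)\<in>S2 (ins p w). if One \<notin> set R \<and> length R \<noteq> 1 then g Q Y * uu (length R + 1) else 0)"
  proof (rule S2_ins_compare[OF pw])
    fix i assume "i \<le> p"
    then have "One \<in> set (drop i (ins p w))" using drop_ins_le pw by simp
    then show "(if One \<notin> set (drop i (ins p w)) \<and> length (drop i (ins p w)) \<noteq> 1
        then g (take i (ins p w)) Y * uu (length (drop i (ins p w)) + 1) else 0) = 0" by simp
  next
    fix j assume "j < p"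
    then show "(if One \<notin> set (drop j w) \<and> length (drop j w) \<noteq> 1
        then sins p g (take j w) Y * uu (length (drop j w) + 1) else 0) = 0"
      by (simp add: sins_def)
  next
    fix j assume "p \<le> j" "j \<le> length w"
    then show "(if One \<notin> set (drop j w) \<and> length (drop j w) \<noteq> 1
        then sins p g (take j w) Y * uu (length (drop j w) + 1) else 0)
      = (if One \<notin> set (drop j w) \<and> length (drop j w) \<noteq> 1
        then g (ins p (take j w)) Y * uu (length (drop j w) + 1) else 0)"
      by (simp add: sins_def)
  qed
  show ?thesis
    unfolding YS_P0[OF Fp_sins[OF F] W] YS_P0[OF F W'] S ..
qed

lemma T2_split: "W \<noteq> [] \<Longrightarrow> T2 G k W b = ksign (k * ldeg d (hd W)) * (\<Sum>c\<in>LL. G (tl W) c * m [hd W, c] b)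
     + (\<Sum>c\<in>LL. G (butlast W) c * m [c, last W] b)"
  unfolding T2_def by simp

lemma sum_unitL: "(\<Sum>c\<in>LL. G c * m [One, c] b) = G b"
  by (cases b) (simp_all add: m_unitL)

lemma BL_ins:
  assumes F: "Fp g p" and W: "One \<in> set (take (Suc p) w)" and pw: "p \<le> length w"
  shows "(\<Sum>c\<in>LL. sins p g (butlast w) c * m [c, last w] b) = (\<Sum>c\<in>LL. g (butlast (ins p w)) c * m [c, last (ins p w)] b)"
proof (cases "p < length w")
  case True
  have "butlast (ins p w) = ins p (butlast w)"
    using True unfolding ins_def by (simp add: butlast_append butlast_drop take_butlast)
  moreover have "last (ins p w) = last w" using True unfolding ins_def by (simp add: last_append)
  moreover have "sins p g (butlast w) c = g (ins p (butlast w)) c" for c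
    using True unfolding sins_def by simp
  ultimately show ?thesis by simp
next
  case False
  then have lw: "length w = p" using pw by simp
  then have "ins p w = w @ [One]" unfolding ins_def by simp
  moreover have "g w c = 0" for c using F W lw unfolding Fp_def by simp
  moreover have "sins p g (butlast w) c = 0" for c using lw pw W unfolding sins_def
    by (cases w) auto
  ultimately show ?thesis by simp
qed

lemma C1_Mc:
  assumes F: "Fp g p"
  shows "circ d m (sins p g) (k + 1) (replicate p Y @ One # z) b - circ d m g k (replicate p Y @ One # One # z) b
     = (if p = 0 then - 2 * ksign k * g (replicate p Y @ One # z) b else 0)"
proof -
  let ?w = "replicate p Y @ One # z"
  have W: "One \<in> set (take (Suc p) ?w)" by simp
  have pw: "p \<le> length ?w" by simp
  have iw: "ins p ?w = replicate p Y @ One # One # z" by (rule ins_rep)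
  have YS: "YS (sins p g) ?w b = YS g (replicate p Y @ One # One # z) b"
    using YS_ins[OF F W pw] iw by simp
  have BL: "(\<Sum>c\<in>LL. sins p g (butlast ?w) c * m [c, last ?w] b)
     = (\<Sum>c\<in>LL. g (butlast (replicate p Y @ One # One # z)) c * m [c, last (replicate p Y @ One # One # z)] b)"
    using BL_ins[OF F W pw] iw by simp
  show ?thesis
  proof (cases p)
    case 0
    have "ksign ((k + 1) * ldeg d One) = - (ksign k :: 'r)" by (simp add: ksign_Suc)
    then show ?thesis using 0 YS BL unfolding Mc_formula
      by (simp add: T2_split sum_unitL sins_def algebra_simps)
  next
    case (Suc q)
    have z1: "sins p g (tl ?w) c = 0" for c
      using Fp_sins[OF F] unfolding Fp_def Suc by simp
    have z2: "g (tl (replicate p Y @ One # One # z)) c = 0" for c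
      using F unfolding Fp_def Suc by simp
    have "circ d m (sins p g) (k + 1) ?w b - circ d m g k (replicate p Y @ One # One # z) b
      = (\<Sum>c\<in>LL. sins p g (butlast ?w) c * m [c, last ?w] b)
       - (\<Sum>c\<in>LL. g (butlast (replicate p Y @ One # One # z)) c * m [c, last (replicate p Y @ One # One # z)] b)
       + (YS (sins p g) ?w b - YS g (replicate p Y @ One # One # z) b)"
      unfolding Mc_formula using z1 z2 by (simp add: T2_split algebra_simps del: replicate_Suc)
    then show ?thesis using YS BL Suc by simp
  qed
qed

lemma C2_Mc:
  assumes F: "Fp g p" and W0: "One \<in> set (take p w)" and pw: "p \<le> length w"
  shows "circ d m (sins p g) (k + 1) w b - circ d m g k (ins p w) b
     = (if hd w = One then ksign (k + 1) * sins p g (tl w) b else 0)"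
proof -
  have W: "One \<in> set (take (Suc p) w)" using W0 by (meson in_set_takeD set_take_subset_set_take le_SucI order.refl subsetD)
  obtain q where pq: "p = Suc q" using W0 by (cases p) auto
  obtain x v where wx: "w = x # v" using W0 by (cases w) auto
  have iw: "ins p w = x # ins q v" using pq wx by simp
  have YS: "YS (sins p g) w b = YS g (ins p w) b" by (rule YS_ins[OF F W pw])
  have BL: "(\<Sum>c\<in>LL. sins p g (butlast w) c * m [c, last w] b) = (\<Sum>c\<in>LL. g (butlast (ins p w)) c * m [c, last (ins p w)] b)"
    by (rule BL_ins[OF F W pw])
  have z2: "g (ins q v) c = 0" for c
    using F take_Suc_ins[of q v] unfolding Fp_def pq by blast
  have "circ d m (sins p g) (k + 1) w b - circ d m g k (ins p w) b
      = ksign ((k + 1) * ldeg d x) * (\<Sum>c\<in>LL. sins p g v c * m [x, c] b)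
       + ((\<Sum>c\<in>LL. sins p g (butlast w) c * m [c, last w] b)
       - (\<Sum>c\<in>LL. g (butlast (ins p w)) c * m [c, last (ins p w)] b))
       + (YS (sins p g) w b - YS g (ins p w) b)"
    unfolding Mc_formula T2_split[OF ins_ne] using wx iw z2
    by (simp add: T2_split algebra_simps del: ins_Suc_Cons)
  also have "\<dots> = ksign ((k + 1) * ldeg d x) * (\<Sum>c\<in>LL. sins p g v c * m [x, c] b)"
    using YS BL by simp
  also have "\<dots> = (if hd w = One then ksign (k + 1) * sins p g (tl w) b else 0)"
  proof (cases x)
    case One
    then show ?thesis using wx by (simp add: sum_unitL)
  next
    case Y
    have "One \<in> set (take q v)" using W0 wx Y pq by simp
    then have "One \<in> set (take p v)" unfolding pq by (meson in_set_takeD set_take_subset_set_take le_SucI order.refl subsetD)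
    then have "sins p g v c = 0" for c using Fp_sins[OF F] unfolding Fp_def by blast
    then show ?thesis using wx Y by simp
  qed
  finally show ?thesis .
qed

lemma hdiff_local:
  assumes "\<And>v c. length v \<le> length w \<Longrightarrow> G v c = G' v c"
  shows "hdiff d m k G w b = hdiff d m k G' w b"
proof -
  have a: "circ d G m (-1) w b = circ d G' m (-1) w b"
    unfolding circ2
  proof (rule sum.cong[OF refl], clarify)
    fix p q r assume pqr: "(p, q, r) \<in> S3 w"
    show "ksign (- 1 * wdeg d p) * (\<Sum>c\<in>LL. m q c * G (p @ [c] @ r) b) = ksign (- 1 * wdeg d p) * (\<Sum>c\<in>LL. m q c * G' (p @ [c] @ r) b)"
    proof (cases "q = []")
      case False
      then have "length (p @ [c] @ r) \<le> length w" for c using pqr by (cases q) auto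
      then show ?thesis using assms by simp
    qed simp
  qed
  have b: "circ d m G k w b = circ d m G' k w b"
    unfolding circ2
  proof (rule sum.cong[OF refl], clarify)
    fix p q r assume pqr: "(p, q, r) \<in> S3 w"
    then have "length q \<le> length w" by auto
    then show "ksign (k * wdeg d p) * (\<Sum>c\<in>LL. G q c * m (p @ [c] @ r) b) = ksign (k * wdeg d p) * (\<Sum>c\<in>LL. G' q c * m (p @ [c] @ r) b)"
      using assms by simp
  qed
  show ?thesis unfolding hdiff_eq a b ..
qed

lemma hdiff_zero: "(\<And>v c. G v c = 0) \<Longrightarrow> hdiff d m k G w b = 0"
  unfolding hdiff_eq by (simp add: circ_inner_zero circ_outer_zero)

lemma Ap_gen:
  assumes "p \<le> length w"
  shows "hdiff d m (k + 1) (sins p g) w b + sins p (hdiff d m k g) w b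
    = (circ d (sins p g) m (-1) w b + circ d g m (-1) (ins p w) b)
      + ksign k * (circ d m (sins p g) (k + 1) w b - circ d m g k (ins p w) b)"
proof -
  have "ksign (k + 1) = - (ksign k :: 'r)" by (rule ksign_Suc)
  moreover have "sins p (hdiff d m k g) w b = hdiff d m k g (ins p w) b"
    unfolding sins_def using assms by simp
  ultimately show ?thesis unfolding hdiff_eq by (simp add: algebra_simps)
qed

lemma Ap_C1:
  assumes F: "Fp g p"
  shows "hdiff d m (k + 1) (sins p g) (replicate p Y @ One # z) b + sins p (hdiff d m k g) (replicate p Y @ One # z) b
     = - g (replicate p Y @ One # z) b"
proof -
  have "hdiff d m (k + 1) (sins p g) (replicate p Y @ One # z) b + sins p (hdiff d m k g) (replicate p Y @ One # z) b
    = (if p = 0 then 1 else -1) * g (replicate p Y @ One # z) b + ksign k * (if p = 0 then - 2 * ksign k * g (replicate p Y @ One # z) b else 0)"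
    unfolding Ap_gen[of p "replicate p Y @ One # z", simplified] ins_rep C1_Cm[OF F] C1_Mc[OF F] ..
  then show ?thesis by (cases p) (simp_all add: algebra_simps)
qed

lemma Ap_C2:
  assumes F: "Fp g p" and W0: "One \<in> set (take p w)"
  shows "hdiff d m (k + 1) (sins p g) w b + sins p (hdiff d m k g) w b = 0"
proof (cases "p \<le> length w")
  case True
  have "hdiff d m (k + 1) (sins p g) w b + sins p (hdiff d m k g) w b
     = (if hd w = One then sins p g (tl w) b else 0) + ksign k * (if hd w = One then ksign (k + 1) * sins p g (tl w) b else 0)"
    unfolding Ap_gen[OF True] C2_Cm[OF F W0 True] C2_Mc[OF F W0 True] ..
  moreover have "ksign (k + 1) = - (ksign k :: 'r)" by (rule ksign_Suc)
  ultimately show ?thesis by simp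
next
  case False
  have "hdiff d m (k + 1) (sins p g) w b = hdiff d m (k + 1) (\<lambda>v c. 0) w b"
    by (rule hdiff_local) (use False in \<open>auto simp: sins_def\<close>)
  also have "\<dots> = 0" by (rule hdiff_zero) simp
  finally show ?thesis using False by (simp add: sins_def)
qed

end




lemma butlast_rep: "butlast (x # replicate n x) = replicate n x"
  by (induction n) auto

lemma butlast_rep2: "0 < n \<Longrightarrow> x # butlast (replicate n x) = replicate n x"
  by (induction n) auto

lemma One_split: "One \<in> set w \<Longrightarrow> \<exists>a z. w = replicate a Y @ One # z"
proof (induction w)
  case Nil then show ?case by simp
next
  case (Cons x w)
  show ?case
  proof (cases x)
    case One then show ?thesis by (intro exI[of _ 0]) auto
  next
    case Y
    then have "One \<in> set w" using Cons.prems by simp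
    then obtain a z where "w = replicate a Y @ One # z" using Cons.IH by blast
    then show ?thesis using Y by (intro exI[of _ "Suc a"]) auto
  qed
qed

context moore
begin

lemma Nn_Y: "Nn G \<Longrightarrow> Nn (\<lambda>v b. G (Y # v) b)" unfolding Nn_def by simp
lemma Nn_One: "Nn G \<Longrightarrow> G (One # v) b = 0" unfolding Nn_def by simp

lemma Cm_N:
  assumes "Nn G"
  shows "circ d G m (-1) (replicate a Y @ One # z) b
    = (if a \<ge> 1 then - G (replicate a Y @ z) b else 0) + (if z \<noteq> [] then G (replicate a Y @ z) b else 0)"
  using assms
proof (induction a arbitrary: G)
  case 0
  have z1: "(\<lambda>v b. G (One # v) b) = (\<lambda>v b. 0)" using Nn_One[OF 0] by (intro ext) simp
  show ?case unfolding append.simps replicate_0 Cm_Cons W1 z1 by (simp add: circ_outer_zero)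
next
  case (Suc a)
  have z: "G (One # r) b = 0" for r using Nn_One[OF Suc.prems] .
  show ?case
    unfolding replicate_Suc append_Cons Cm_Cons[of G Y] W2[where G = G, OF z] ksign_ldegY[of 1, simplified]
      Suc.IH[OF Nn_Y[OF Suc.prems]]
    by (cases a) auto
qed

lemma Cm_N_Yword:
  assumes "Nn G"
  shows "circ d G m (-1) (replicate n Y) b = 0"
  using assms
proof (induction n arbitrary: G)
  case 0
  show ?case unfolding circ2 by (simp add: S3_Nil)
next
  case (Suc n)
  have z: "G (One # r) b = 0" for r using Nn_One[OF Suc.prems] .
  show ?case
    unfolding replicate_Suc Cm_Cons[of G Y] W2[where G = G, OF z] ksign_ldegY[of 1, simplified]
      Suc.IH[OF Nn_Y[OF Suc.prems]]
    by (cases n) auto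
qed

lemma YS_N: "Nn G \<Longrightarrow> One \<in> set W \<Longrightarrow> YS G W b = 0"
  unfolding YS_def Nn_def by (auto intro!: sum.neutral)

lemma hom_YOne: "hom Rg d k x \<Longrightarrow> even k \<Longrightarrow> x (replicate j Y) One = 0"
  by (rule hom_odd) (use d_even in \<open>auto simp: wdeg_replicate\<close>)

lemma hom_YY: "hom Rg d k x \<Longrightarrow> odd k \<Longrightarrow> x (replicate j Y) Y = 0"
  by (rule hom_odd) (use d_even in \<open>auto simp: wdeg_replicate\<close>)

lemma par1: "hom Rg d k x \<Longrightarrow> ksign k * x (replicate j Y) One = - x (replicate j Y) One"
  by (cases "even k") (auto simp: ksign_even ksign_odd hom_YOne)

lemma par2: "hom Rg d k x \<Longrightarrow> ksign k * x (replicate j Y) Y = x (replicate j Y) Y"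
  by (cases "even k") (auto simp: ksign_even ksign_odd hom_YY)

lemma N1:
  assumes N: "Nn x" and H: "hom Rg d k x" and w: "One \<in> set w"
  shows "hdiff d m k x w b = 0"
proof -
  obtain a z where wz: "w = replicate a Y @ One # z" using One_split[OF w] by blast
  have ne: "w \<noteq> []" using wz by simp
  have Mc: "circ d m x k w b = ksign (k * ldeg d (hd w)) * (\<Sum>c\<in>LL. x (tl w) c * m [hd w, c] b)
       + (\<Sum>c\<in>LL. x (butlast w) c * m [c, last w] b)"
    unfolding Mc_formula YS_N[OF N w] T2_split[OF ne] by simp
  have xz: "One \<in> set v \<Longrightarrow> x v c = 0" for v c using N unfolding Nn_def by blast
  show ?thesis
  proof (cases a)
    case 0
    show ?thesis
    proof (cases z)
      case Nil
      have "hdiff d m k x w b = - (x [] b + ksign k * (\<Sum>c\<in>LL. x [] c * m [c, One] b))"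
        unfolding hdiff_eq Mc using wz 0 Nil Cm_N[OF N, of 0 "[]" b] by (simp add: sum_unitL algebra_simps)
      also have "\<dots> = 0"
        using par1[OF H, of 0] par2[OF H, of 0] by (cases b) (auto simp: m_OneOne m_YOne algebra_simps)
      finally show ?thesis .
    next
      case (Cons y z')
      have "butlast w = One # butlast z" using wz 0 Cons by simp
      then have "x (butlast w) c = 0" for c using xz by simp
      then show ?thesis
        unfolding hdiff_eq Mc using wz 0 Cons Cm_N[OF N, of 0 z b] by (simp add: sum_unitL algebra_simps)
    qed
  next
    case (Suc a')
    have tl0: "x (tl w) c = 0" for c using xz wz Suc by simp
    show ?thesis
    proof (cases z)
      case Nil
      have "hdiff d m k x w b = - x (replicate a Y) b - ksign k * (\<Sum>c\<in>LL. x (replicate a Y) c * m [c, One] b)"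
        unfolding hdiff_eq Mc using wz Suc Nil Cm_N[OF N, of a "[]" b] tl0 by (simp add: butlast_append)
      also have "\<dots> = 0"
        using par1[OF H, of a] par2[OF H, of a] by (cases b) (auto simp: m_OneOne m_YOne algebra_simps)
      finally show ?thesis .
    next
      case (Cons y z')
      have "One \<in> set (butlast w)" using wz Cons by (simp add: butlast_append)
      then have "x (butlast w) c = 0" for c using xz by simp
      then show ?thesis
        unfolding hdiff_eq Mc using wz Suc Cons Cm_N[OF N, of a z b] tl0 by simp
    qed
  qed
qed

lemma S3_rep_count:
  "(\<Sum>(P, Q, R)\<in>S3 (replicate N Y). G (length P + length R)) = (\<Sum>s\<le>N. of_nat (s + 1) * G s)"
proof -
  have "(\<Sum>(P, Q, R)\<in>S3 (replicate N Y). G (length P + length R)) = (\<Sum>(s, a)\<in>Sigma {..N} (\<lambda>s. {..s}). G s)"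
  proof (rule sum.reindex_bij_witness[where i = "\<lambda>(s, a). (replicate a Y, replicate (N - s) Y, replicate (s - a) Y)"
        and j = "\<lambda>(P, Q, R). (length P + length R, length P)"])
    fix t assume "t \<in> S3 (replicate N Y)"
    then obtain P Q R where t: "t = (P, Q, R)" "P @ Q @ R = replicate N Y" by (cases t) auto
    then have "One \<notin> set P" "One \<notin> set Q" "One \<notin> set R" by (metis Un_iff in_set_replicate letter.distinct(1) set_append)+
    then have "P = replicate (length P) Y" "Q = replicate (length Q) Y" "R = replicate (length R) Y"
      using Yword_eq by blast+
    moreover have "length P + length Q + length R = N" using t by (metis length_append length_replicate add.assoc)
    ultimately show "(case case t of (P, Q, R) \<Rightarrow> (length P + length R, length P) of
        (s, a) \<Rightarrow> (replicate a Y, replicate (N - s) Y, replicate (s - a) Y)) = t"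
      using t by (auto simp: algebra_simps)
    show "(case t of (P, Q, R) \<Rightarrow> (length P + length R, length P)) \<in> Sigma {..N} (\<lambda>s. {..s})"
      using t \<open>length P + length Q + length R = N\<close> by auto
    show "(case case t of (P, Q, R) \<Rightarrow> (length P + length R, length P) of (s, a) \<Rightarrow> G s) =
        (case t of (P, Q, R) \<Rightarrow> G (length P + length R))" using t by simp
  next
    fix u assume "u \<in> Sigma {..N} (\<lambda>s. {..s})"
    then obtain s a where u: "u = (s, a)" "s \<le> N" "a \<le> s" by auto
    show "(case case u of (s, a) \<Rightarrow> (replicate a Y, replicate (N - s) Y, replicate (s - a) Y) of
        (P, Q, R) \<Rightarrow> (length P + length R, length P)) = u" using u by auto
    have "replicate a Y @ replicate (N - s) Y @ replicate (s - a) Y = replicate N Y"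
      using u by (simp add: replicate_add[symmetric])
    then show "(case u of (s, a) \<Rightarrow> (replicate a Y, replicate (N - s) Y, replicate (s - a) Y)) \<in> S3 (replicate N Y)"
      using u by simp
  qed
  also have "\<dots> = (\<Sum>s\<le>N. \<Sum>a\<le>s. G s)" by (rule sum.Sigma[symmetric]) auto
  also have "\<dots> = (\<Sum>s\<le>N. of_nat (s + 1) * G s)" by simp
  finally show ?thesis .
qed

lemma McY:
  "circ d m G k (replicate N Y) b = (if b = One then (\<Sum>s\<le>N. of_nat (s + 1) * uu (s + 1) * G (replicate (N - s) Y) Y) else 0)"
proof -
  let ?W = "replicate N Y"
  have Yw: "(P, Q, R) \<in> S3 ?W \<Longrightarrow> One \<notin> set P \<and> One \<notin> set Q \<and> One \<notin> set R" for P Q R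
    by (metis Un_iff in_set_replicate letter.distinct(1) set_append mem_S3)
  have "circ d m G k ?W b = (\<Sum>(P, Q, R)\<in>S3 ?W. G Q Y * m (P @ [Y] @ R) b)
     + (\<Sum>(P, Q, R)\<in>S3 ?W. G Q One * m (P @ [One] @ R) b)"
    unfolding circ2 sum.distrib[symmetric]
    by (rule sum.cong[OF refl], clarify) (use Yw ksign_Yword in \<open>simp add: algebra_simps\<close>)
  also have "(\<Sum>(P, Q, R)\<in>S3 ?W. G Q One * m (P @ [One] @ R) b)
     = (\<Sum>(P, Q, R)\<in>S3 ?W. if length P + length R = 1 then G Q One * m (P @ [One] @ R) b else 0)"
    by (rule sum.cong[OF refl], clarify) (simp add: m_One)
  also have "\<dots> = 0"
    unfolding sum_S3_len1
  proof (cases N)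
    case (Suc n)
    then show "(if ?W = [] then 0 else G (tl ?W) One * m ([hd ?W] @ [One] @ []) b
        + G (butlast ?W) One * m ([] @ [One] @ [last ?W]) b) = 0"
      by (cases b) (simp_all add: m_YOne m_unitL butlast_rep butlast_rep2)
  qed simp
  also have "(\<Sum>(P, Q, R)\<in>S3 ?W. G Q Y * m (P @ [Y] @ R) b)
     = (if b = One then (\<Sum>(P, Q, R)\<in>S3 ?W. G (replicate (N - (length P + length R)) Y) Y * uu (length P + length R + 1)) else 0)"
  proof (cases "b = One")
    case True
    have pt: "G Q Y * m (P @ [Y] @ R) b = G (replicate (N - (length P + length R)) Y) Y * uu (length P + length R + 1)"
      if pqr: "(P, Q, R) \<in> S3 ?W" for P Q R
    proof -
      have y: "One \<notin> set P" "One \<notin> set Q" "One \<notin> set R" using Yw pqr by auto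
      have "Q = replicate (length Q) Y" using Yword_eq y by blast
      moreover have "length Q = N - (length P + length R)" using pqr
        by (metis mem_S3 add_diff_cancel_left' add.commute length_append length_replicate add.assoc)
      moreover have "m (P @ [Y] @ R) b = uu (length P + length R + 1)" using m_Yword[of "P @ [Y] @ R" b] y True by simp
      ultimately show ?thesis by simp
    qed
    have "(\<Sum>(P, Q, R)\<in>S3 ?W. G Q Y * m (P @ [Y] @ R) b)
       = (\<Sum>(P, Q, R)\<in>S3 ?W. G (replicate (N - (length P + length R)) Y) Y * uu (length P + length R + 1))"
      by (rule sum.cong[OF refl], clarify, rule pt)
    then show ?thesis using True by simp
  next
    case False
    then have "b = Y" by (cases b) auto
    then show ?thesis using Yw m_Yout by (auto intro!: sum.neutral)
  qed
  also have "(\<Sum>(P, Q, R)\<in>S3 ?W. G (replicate (N - (length P + length R)) Y) Y * uu (length P + length R + 1))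
      = (\<Sum>s\<le>N. of_nat (s + 1) * (G (replicate (N - s) Y) Y * uu (s + 1)))"
    by (rule S3_rep_count)
  finally show ?thesis by (simp add: algebra_simps)
qed

lemma N2:
  assumes N: "Nn x"
  shows "hdiff d m k x (replicate n Y) b
    = (if b = One then - ksign k * (\<Sum>s\<le>n. of_nat (s + 1) * uu (s + 1) * x (replicate (n - s) Y) Y) else 0)"
  unfolding hdiff_eq Cm_N_Yword[OF N] McY by simp

lemma fps_deriv_char: "fps_nth (fps_deriv (char_series m)) i = of_nat (i + 1) * uu (i + 1)"
  unfolding char_series_def uu_def by (simp add: fps_deriv_def)

lemma fps_deriv_mult_nth:
  "fps_nth (fps_deriv (char_series m) * Abs_fps Gf) n = (\<Sum>s\<le>n. of_nat (s + 1) * uu (s + 1) * Gf (n - s))"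
  unfolding fps_mult_nth fps_deriv_char atLeast0AtMost by simp

end




lemma first_One_at:
  assumes "One \<in> set (take (Suc p) q)" "One \<notin> set (take p q)"
  shows "\<exists>z. q = replicate p Y @ One # z"
  using assms
proof (induction p arbitrary: q)
  case 0
  then obtain x q' where "q = x # q'" by (cases q) auto
  then show ?case using 0 by auto
next
  case (Suc p)
  then obtain x q' where q: "q = x # q'" by (cases q) auto
  then have x: "x = Y" using Suc.prems by (cases x) auto
  have "One \<in> set (take (Suc p) q')" "One \<notin> set (take p q')" using Suc.prems q x by auto
  then obtain z where "q' = replicate p Y @ One # z" using Suc.IH by blast
  then show ?case using q x by auto
qed

context moore
begin

lemma sins_hom:
  assumes "hom Rg d k g" shows "hom Rg d (k + 1) (sins p g)"
  unfolding hom_def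
proof (intro allI)
  fix w b
  have "g (ins p w) b \<in> Rg (k + wdeg d (ins p w) - ldeg d b)" using assms unfolding hom_def by blast
  then show "sins p g w b \<in> Rg (k + 1 + wdeg d w - ldeg d b)"
    unfolding sins_def by (auto simp: Rg_zero algebra_simps)
qed

lemma hom_add: "hom Rg d k f \<Longrightarrow> hom Rg d k g \<Longrightarrow> hom Rg d k (\<lambda>w b. f w b + g w b)"
  unfolding hom_def by (auto intro: Rg_add)

lemma hom_diff: "hom Rg d k f \<Longrightarrow> hom Rg d k g \<Longrightarrow> hom Rg d k (\<lambda>w b. f w b - g w b)"
  unfolding hom_def by (auto intro: Rg_diff)

lemma hom_zero: "hom Rg d k (\<lambda>w b. 0)"
  unfolding hom_def by (auto intro: Rg_zero)

lemma hdiff_add: "hdiff d m k (\<lambda>w b. f w b + g w b) w b = hdiff d m k f w b + hdiff d m k g w b"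
  unfolding hdiff_eq circ_outer_add circ_inner_add by (simp add: algebra_simps)

lemma hdiff_diff: "hdiff d m k (\<lambda>w b. f w b - g w b) w b = hdiff d m k f w b - hdiff d m k g w b"
proof -
  have a: "circ d (\<lambda>w b. f w b - g w b) m (-1) w b = circ d f m (-1) w b - circ d g m (-1) w b"
    using circ_outer_diff[of d f 1 g m "-1" w b] by simp
  have b: "circ d m (\<lambda>w b. f w b - g w b) k w b = circ d m f k w b - circ d m g k w b"
    using circ_inner_diff[of d m f 1 g k w b] by simp
  show ?thesis unfolding hdiff_eq a b by (simp add: algebra_simps)
qed

lemma hdiff_smult: "hdiff d m k (\<lambda>w b. r * f w b) w b = r * hdiff d m k f w b"
  unfolding hdiff_eq circ_outer_smult circ_inner_smult by (simp add: algebra_simps)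

lemma hdiff_shift: "even j \<Longrightarrow> hdiff d m (j + k) G = hdiff d m k G"
proof (intro ext)
  fix w b assume j: "even j"
  have a: "ksign (j + k) = (ksign k :: 'r)" using j by (simp add: ksign_add ksign_even)
  have b: "circ d m G (j + k) w b = circ d m G k w b"
    unfolding circ2 using j by (intro sum.cong[OF refl]) (auto simp: distrib_right ksign_add ksign_even)
  show "hdiff d m (j + k) G w b = hdiff d m k G w b" unfolding hdiff_eq a b ..
qed

primrec fseq :: "int \<Rightarrow> 'r cod \<Rightarrow> nat \<Rightarrow> 'r cod" where
  "fseq k f 0 = f"
| "fseq k f (Suc p) = (\<lambda>w b. fseq k f p w b + hdiff d m (k + 1) (sins p (fseq k f p)) w b)"

definition Hf :: "int \<Rightarrow> 'r cod \<Rightarrow> 'r cod" where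
  "Hf k f = (\<lambda>v b. \<Sum>p<Suc (length v). sins p (fseq k f p) v b)"

definition Pif :: "int \<Rightarrow> 'r cod \<Rightarrow> 'r cod" where
  "Pif k f = (\<lambda>w b. fseq k f (Suc (length w)) w b)"

lemma fseq_hom: "hom Rg d k f \<Longrightarrow> hom Rg d k (fseq k f p)"
proof (induction p)
  case (Suc p)
  have "hom Rg d (k + 1 - 1) (hdiff d m (k + 1) (sins p (fseq k f p)))"
    by (rule hdiff_hom[OF sins_hom[OF Suc.IH[OF Suc.prems]]])
  then show ?case using Suc by (simp add: hom_add)
qed simp

lemma hdiff_sq_k: "hom Rg d (k + 1) G \<Longrightarrow> hdiff d m k (hdiff d m (k + 1) G) w b = 0"
  using hdiff_sq'[of "k + 1" G w b] by simp

lemma fseq_key: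
  assumes H: "hom Rg d k f" and N: "Nn (hdiff d m k f)"
  shows "Fp (fseq k f p) p \<and> Nn (hdiff d m k (fseq k f p))"
proof (induction p)
  case 0
  show ?case using N by (simp add: Fp_def)
next
  case (Suc p)
  let ?g = "fseq k f p"
  have Hg: "hom Rg d k ?g" using fseq_hom[OF H] .
  have Fg: "Fp ?g p" and Ng: "Nn (hdiff d m k ?g)" using Suc by auto
  have sq: "hdiff d m k (hdiff d m (k + 1) (sins p ?g)) w b = 0" for w b
    by (rule hdiff_sq_k[OF sins_hom[OF Hg]])
  have N': "Nn (hdiff d m k (fseq k f (Suc p)))"
    using Ng unfolding Nn_def by (simp add: hdiff_add sq)
  have sz: "sins p (hdiff d m k ?g) q c = 0" for q c
    using Ng unfolding Nn_def sins_def by simp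
  have F': "Fp (fseq k f (Suc p)) (Suc p)"
    unfolding Fp_def
  proof (intro allI impI)
    fix q c assume q: "One \<in> set (take (Suc p) q)"
    show "fseq k f (Suc p) q c = 0"
    proof (cases "One \<in> set (take p q)")
      case True
      have "?g q c = 0" using Fg True unfolding Fp_def by blast
      moreover have "hdiff d m (k + 1) (sins p ?g) q c = 0" using Ap_C2[OF Fg True, of k c] sz by simp
      ultimately show ?thesis by simp
    next
      case False
      then obtain z where qz: "q = replicate p Y @ One # z" using first_One_at q by blast
      show ?thesis using Ap_C1[OF Fg, of k z c] sz qz by simp
    qed
  qed
  show ?case using N' F' by simp
qed

definition HM :: "int \<Rightarrow> 'r cod \<Rightarrow> nat \<Rightarrow> 'r cod" where
  "HM k f M = (\<lambda>v b. \<Sum>p<M. sins p (fseq k f p) v b)"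

lemma fseq_eq: "fseq k f M w b = f w b + hdiff d m (k + 1) (HM k f M) w b"
proof (induction M arbitrary: w b)
  case 0
  show ?case unfolding HM_def by (simp add: hdiff_zero)
next
  case (Suc M)
  have "HM k f (Suc M) = (\<lambda>v b. HM k f M v b + sins M (fseq k f M) v b)"
    unfolding HM_def by (intro ext) simp
  then show ?case using Suc by (simp add: hdiff_add)
qed

lemma Pif_eq: "Pif k f w b = f w b + hdiff d m (k + 1) (Hf k f) w b"
proof -
  have "hdiff d m (k + 1) (HM k f (Suc (length w))) w b = hdiff d m (k + 1) (Hf k f) w b"
  proof (rule hdiff_local)
    fix v :: "letter list" and c :: letter assume lv: "length v \<le> length w"
    show "HM k f (Suc (length w)) v c = Hf k f v c"
      unfolding HM_def Hf_def
      by (rule sum.mono_neutral_right) (use lv in \<open>auto simp: sins_def\<close>)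
  qed
  then show ?thesis unfolding Pif_def fseq_eq by simp
qed

lemma Pif_Nn:
  assumes "hom Rg d k f" "Nn (hdiff d m k f)"
  shows "Nn (Pif k f)"
  unfolding Nn_def
proof (intro allI impI)
  fix q c assume q: "One \<in> set q"
  have "Fp (fseq k f (Suc (length q))) (Suc (length q))" using fseq_key[OF assms] by blast
  moreover have "take (Suc (length q)) q = q" by simp
  ultimately show "Pif k f q c = 0" using q unfolding Fp_def Pif_def by metis
qed

lemma Hf_hom:
  assumes "hom Rg d k f" shows "hom Rg d (k + 1) (Hf k f)"
  unfolding hom_def
proof (intro allI)
  fix v b
  have "sins p (fseq k f p) v b \<in> Rg (k + 1 + wdeg d v - ldeg d b)" for p
    using sins_hom[OF fseq_hom[OF assms]] unfolding hom_def by blast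
  then show "Hf k f v b \<in> Rg (k + 1 + wdeg d v - ldeg d b)"
    unfolding Hf_def by (intro Rg_sum) auto
qed

lemma Pif_hom: "hom Rg d k f \<Longrightarrow> hom Rg d k (Pif k f)"
  unfolding hom_def Pif_def using fseq_hom unfolding hom_def by blast

lemma fseq_add: "fseq k (\<lambda>w b. f w b + g w b) p = (\<lambda>w b. fseq k f p w b + fseq k g p w b)"
proof (induction p)
  case (Suc p)
  have "sins p (\<lambda>w b. fseq k f p w b + fseq k g p w b) = (\<lambda>w b. sins p (fseq k f p) w b + sins p (fseq k g p) w b)"
    unfolding sins_def by (intro ext) simp
  then show ?case using Suc by (intro ext) (simp add: hdiff_add)
qed simp

lemma fseq_smult: "fseq k (\<lambda>w b. r * f w b) p = (\<lambda>w b. r * fseq k f p w b)"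
proof (induction p)
  case (Suc p)
  have "sins p (\<lambda>w b. r * fseq k f p w b) = (\<lambda>w b. r * sins p (fseq k f p) w b)"
    unfolding sins_def by (intro ext) simp
  then show ?case using Suc by (intro ext) (simp add: hdiff_smult algebra_simps)
qed simp

lemma fseq_shift: "even j \<Longrightarrow> fseq (j + k) f p = fseq k f p"
proof (induction p)
  case (Suc p)
  have "hdiff d m (j + k + 1) G = hdiff d m (k + 1) G" for G using hdiff_shift[OF Suc.prems, of "k + 1"]
    by (simp add: add.assoc)
  then show ?case using Suc by simp
qed simp

lemma fseq_N: "Nn f \<Longrightarrow> fseq k f p = f"
proof (induction p)
  case (Suc p)
  have "sins p f v c = 0" for v c using Suc.prems unfolding Nn_def sins_def by simp
  then show ?case using Suc by (intro ext) (simp add: hdiff_zero)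
qed simp

lemma fps_nonzd:
  assumes "fps_deriv (char_series m) * G = 0"
  shows "G = 0"
proof -
  have "fps_nth G n = 0" for n
  proof (induction n rule: less_induct)
    case (less n)
    have "0 = fps_nth (fps_deriv (char_series m) * Abs_fps (fps_nth G)) n" using assms by (simp add: fps_nth_inverse)
    also have "\<dots> = (\<Sum>s\<le>n. of_nat (s + 1) * uu (s + 1) * fps_nth G (n - s))" by (rule fps_deriv_mult_nth)
    also have "\<dots> = (\<Sum>s\<in>{0}. of_nat (s + 1) * uu (s + 1) * fps_nth G (n - s))"
      by (rule sum.mono_neutral_right) (use less in auto)
    also have "\<dots> = fps_nth G n * m [Y] One" by (simp add: uu_def)
    finally show ?case using nzd by metis
  qed
  then show ?thesis by (simp add: fps_eq_iff)
qed

end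




context moore
begin

definition phi :: "int \<Rightarrow> 'r cod \<Rightarrow> 'r fps" where
  "phi k f = Abs_fps (\<lambda>n. Pif k f (replicate n Y) One)"

lemma cocycleD: "f \<in> cocycles Rg d m k \<Longrightarrow> hom Rg d k f \<and> (\<forall>w b. hdiff d m k f w b = 0)"
  unfolding cocycles_def by (auto dest: fun_cong)

lemma Nn_zero: "Nn (\<lambda>w b. 0)" unfolding Nn_def by simp

lemma phi_gfps: "hom Rg d k f \<Longrightarrow> phi k f \<in> gfps Rg d (k + -1)"
  unfolding gfps_def phi_def
proof (intro CollectI allI)
  fix i assume "hom Rg d k f"
  then have "Pif k f (replicate i Y) One \<in> Rg (k + wdeg d (replicate i Y) - ldeg d One)"
    using Pif_hom unfolding hom_def by blast
  then show "fps_nth (Abs_fps (\<lambda>n. Pif k f (replicate n Y) One)) i \<in> Rg (k + -1 + int i * (d + 2))"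
    by (simp add: wdeg_replicate algebra_simps)
qed

lemma Pif_add: "Pif k (\<lambda>w b. f w b + g w b) w b = Pif k f w b + Pif k g w b"
  unfolding Pif_def fseq_add by simp

lemma Pif_smult: "Pif k (\<lambda>w b. r * f w b) w b = r * Pif k f w b"
  unfolding Pif_def fseq_smult by simp

lemma Pif_shift: "even j \<Longrightarrow> Pif (j + k) f = Pif k f"
  unfolding Pif_def fseq_shift by simp

lemma Pif_N: "Nn f \<Longrightarrow> Pif k f = f"
  unfolding Pif_def fseq_N by simp

lemma hdiff_Pif:
  assumes H: "hom Rg d k f"
  shows "hdiff d m k (Pif k f) w b = hdiff d m k f w b"
proof -
  have e: "Pif k f = (\<lambda>w b. f w b + hdiff d m (k + 1) (Hf k f) w b)" by (intro ext) (rule Pif_eq)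
  show ?thesis unfolding e hdiff_add hdiff_sq_k[OF Hf_hom[OF H]] by simp
qed

lemma N2fps:
  assumes "Nn x"
  shows "hdiff d m k x (replicate n Y) One = - ksign k * fps_nth (fps_deriv (char_series m) * Abs_fps (\<lambda>l. x (replicate l Y) Y)) n"
  unfolding N2[OF assms] fps_deriv_mult_nth by simp

lemma main:
  "\<exists>(s::int) (\<phi>::int \<Rightarrow> 'r cod \<Rightarrow> 'r fps).
    (\<forall>k. \<forall>f\<in>cocycles Rg d m k. \<phi> k f \<in> gfps Rg d (k + s)) \<and>
    (\<forall>k. \<forall>f\<in>cocycles Rg d m k. \<forall>g\<in>cocycles Rg d m k.
        \<phi> k (\<lambda>w b. f w b + g w b) = \<phi> k f + \<phi> k g) \<and>
    (\<forall>j k r. \<forall>f\<in>cocycles Rg d m k. r \<in> Rg j \<longrightarrow>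
        \<phi> (j + k) (\<lambda>w b. r * f w b) = fps_const r * \<phi> k f) \<and>
    (\<forall>k. \<forall>p\<in>gfps Rg d (k + s). \<exists>f\<in>cocycles Rg d m k.
        \<phi> k f - p \<in> gideal Rg d (fps_deriv (char_series m)) d (k + s)) \<and>
    (\<forall>k. \<forall>f\<in>cocycles Rg d m k.
        \<phi> k f \<in> gideal Rg d (fps_deriv (char_series m)) d (k + s) \<longleftrightarrow>
        f \<in> coboundaries Rg d m k)"
proof (intro exI[of _ "-1"] exI[of _ phi] conjI allI ballI impI)
  fix k f assume "f \<in> cocycles Rg d m k"
  then show "phi k f \<in> gfps Rg d (k + -1)" using cocycleD phi_gfps by blast
next
  fix k f g
  show "phi k (\<lambda>w b. f w b + g w b) = phi k f + phi k g"
    unfolding phi_def by (rule fps_ext) (simp add: Pif_add)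
next
  fix j k r f assume f: "f \<in> cocycles Rg d m k" and r: "r \<in> Rg j"
  show "phi (j + k) (\<lambda>w b. r * f w b) = fps_const r * phi k f"
  proof (cases "even j")
    case True
    show ?thesis unfolding phi_def Pif_shift[OF True] by (rule fps_ext) (simp add: Pif_smult)
  next
    case False
    then have "r = 0" using Rg_odd r by blast
    then show ?thesis unfolding phi_def by (intro fps_ext) (simp add: Pif_N[OF Nn_zero])
  qed
next
  fix k p assume p: "p \<in> gfps Rg d (k + -1)"
  define f where "f = (\<lambda>w b. if One \<notin> set w \<and> b = One then fps_nth p (length w) else 0)"
  have Nf: "Nn f" unfolding Nn_def f_def by simp
  have Hf': "hom Rg d k f"
    unfolding hom_def f_def
  proof (intro allI)
    fix w b
    show "(if One \<notin> set w \<and> b = One then fps_nth p (length w) else 0) \<in> Rg (k + wdeg d w - ldeg d b)"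
    proof (cases "One \<notin> set w \<and> b = One")
      case True
      have "fps_nth p (length w) \<in> Rg (k + -1 + int (length w) * (d + 2))" using p unfolding gfps_def by blast
      then show ?thesis using True by (simp add: wdeg_Yword algebra_simps)
    qed (auto simp: Rg_zero)
  qed
  have cf: "hdiff d m k f w b = 0" for w b
  proof (cases "One \<in> set w")
    case True then show ?thesis by (rule N1[OF Nf Hf'])
  next
    case False
    then have w: "w = replicate (length w) Y" by (rule Yword_eq)
    have "hdiff d m k f (replicate (length w) Y) b = 0" unfolding N2[OF Nf] by (simp add: f_def)
    then show ?thesis using w by simp
  qed
  have fc: "f \<in> cocycles Rg d m k" unfolding cocycles_def using Hf' cf by auto
  have "phi k f = p" unfolding phi_def Pif_N[OF Nf] by (rule fps_ext) (simp add: f_def)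
  then have "phi k f - p = fps_deriv (char_series m) * 0" by simp
  moreover have "(0 :: 'r fps) \<in> gfps Rg d (k + -1 - d)" unfolding gfps_def by (simp add: Rg_zero)
  ultimately have "phi k f - p \<in> gideal Rg d (fps_deriv (char_series m)) d (k + -1)"
    unfolding gideal_def by blast
  then show "\<exists>f\<in>cocycles Rg d m k. phi k f - p \<in> gideal Rg d (fps_deriv (char_series m)) d (k + -1)"
    using fc by blast
next
  fix k f assume f: "f \<in> cocycles Rg d m k"
  have Hf0: "hom Rg d k f" and cf: "\<And>w b. hdiff d m k f w b = 0" using cocycleD[OF f] by auto
  have Nd: "Nn (hdiff d m k f)" unfolding Nn_def using cf by simp
  let ?P = "Pif k f"
  have NP: "Nn ?P" by (rule Pif_Nn[OF Hf0 Nd])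
  have HP: "hom Rg d k ?P" by (rule Pif_hom[OF Hf0])
  have PE: "?P w b = f w b + hdiff d m (k + 1) (Hf k f) w b" for w b by (rule Pif_eq)
  have HH: "hom Rg d (k + 1) (Hf k f)" by (rule Hf_hom[OF Hf0])
  show "phi k f \<in> gideal Rg d (fps_deriv (char_series m)) d (k + -1) \<longleftrightarrow> f \<in> coboundaries Rg d m k"
  proof
    assume "phi k f \<in> gideal Rg d (fps_deriv (char_series m)) d (k + -1)"
    then obtain c where c: "c \<in> gfps Rg d (k + -1 - d)" and pc: "phi k f = fps_deriv (char_series m) * c"
      unfolding gideal_def by blast
    have dP: "hdiff d m k ?P w b = 0" for w b using hdiff_Pif[OF Hf0] cf by simp
    have G0: "fps_deriv (char_series m) * Abs_fps (\<lambda>l. ?P (replicate l Y) Y) = 0"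
    proof (rule fps_ext)
      fix n
      have "0 = - ksign k * fps_nth (fps_deriv (char_series m) * Abs_fps (\<lambda>l. ?P (replicate l Y) Y)) n"
        using dP[of "replicate n Y" One] unfolding N2fps[OF NP] by simp
      then show "fps_nth (fps_deriv (char_series m) * Abs_fps (\<lambda>l. ?P (replicate l Y) Y)) n = fps_nth 0 n"
        unfolding ksign_def by (auto split: if_splits)
    qed
    have PY: "?P (replicate l Y) Y = 0" for l
    proof -
      have "fps_nth (Abs_fps (\<lambda>l. ?P (replicate l Y) Y)) l = fps_nth 0 l" using fps_nonzd[OF G0] by simp
      then show ?thesis by simp
    qed
    define y where "y = (\<lambda>w b. if One \<notin> set w \<and> b = Y then ksign k * fps_nth c (length w) else 0)"
    have Ny: "Nn y" unfolding Nn_def y_def by simp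
    have Hy: "hom Rg d (k + 1) y"
      unfolding hom_def y_def
    proof (intro allI)
      fix w b
      show "(if One \<notin> set w \<and> b = Y then ksign k * fps_nth c (length w) else 0) \<in> Rg (k + 1 + wdeg d w - ldeg d b)"
      proof (cases "One \<notin> set w \<and> b = Y")
        case True
        have "fps_nth c (length w) \<in> Rg (k + -1 - d + int (length w) * (d + 2))" using c unfolding gfps_def by blast
        then show ?thesis using True by (auto simp: wdeg_Yword algebra_simps intro!: Rg_ksign)
      qed (auto simp: Rg_zero)
    qed
    have yc: "Abs_fps (\<lambda>l. y (replicate l Y) Y) = fps_const (ksign k) * c"
      unfolding y_def by (rule fps_ext) simp
    have dy: "hdiff d m (k + 1) y w b = ?P w b" for w b
    proof (cases "One \<in> set w")
      case True
      then show ?thesis using N1[OF Ny Hy True] NP unfolding Nn_def by simp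
    next
      case False
      then have w: "w = replicate (length w) Y" by (rule Yword_eq)
      show ?thesis
      proof (cases b)
        case One
        have "hdiff d m (k + 1) y (replicate (length w) Y) One = - ksign (k + 1) * fps_nth (fps_deriv (char_series m) * (fps_const (ksign k) * c)) (length w)"
          unfolding N2fps[OF Ny] yc ..
        also have "\<dots> = fps_nth (fps_deriv (char_series m) * c) (length w)"
          unfolding ksign_Suc by (simp add: mult.left_commute[of _ "fps_const (ksign k)"])
        also have "\<dots> = ?P (replicate (length w) Y) One" unfolding pc[symmetric] phi_def by simp
        finally show ?thesis using One w by simp
      next
        case Y
        have "hdiff d m (k + 1) y (replicate (length w) Y) Y = 0" unfolding N2[OF Ny] by simp
        then show ?thesis using PY[of "length w"] w Y by simp
      qed
    qed
    have "f = hdiff d m (k + 1) (\<lambda>w b. y w b - Hf k f w b)"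
    proof (intro ext)
      fix w b
      show "f w b = hdiff d m (k + 1) (\<lambda>w b. y w b - Hf k f w b) w b"
        unfolding hdiff_diff dy PE by simp
    qed
    moreover have "hom Rg d (k + 1) (\<lambda>w b. y w b - Hf k f w b)" by (rule hom_diff[OF Hy HH])
    ultimately show "f \<in> coboundaries Rg d m k" unfolding coboundaries_def by blast
  next
    assume "f \<in> coboundaries Rg d m k"
    then obtain g where Hg: "hom Rg d (k + 1) g" and fg: "f = hdiff d m (k + 1) g"
      unfolding coboundaries_def by blast
    define x where "x = (\<lambda>w b. g w b + Hf k f w b)"
    have Hx: "hom Rg d (k + 1) x" unfolding x_def by (rule hom_add[OF Hg HH])
    have Px: "?P w b = hdiff d m (k + 1) x w b" for w b
    proof -
      have "hdiff d m (k + 1) x w b = hdiff d m (k + 1) g w b + hdiff d m (k + 1) (Hf k f) w b"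
        unfolding x_def by (rule hdiff_add)
      also have "hdiff d m (k + 1) g w b = f w b" using fg by simp
      finally show ?thesis using PE[of w b] by simp
    qed
    have Nx: "Nn (hdiff d m (k + 1) x)" using NP Px unfolding Nn_def by simp
    define y where "y = Pif (k + 1) x"
    have Ny: "Nn y" unfolding y_def by (rule Pif_Nn[OF Hx Nx])
    have Hy: "hom Rg d (k + 1) y" unfolding y_def by (rule Pif_hom[OF Hx])
    have dy: "hdiff d m (k + 1) y w b = ?P w b" for w b
      unfolding y_def hdiff_Pif[OF Hx] Px ..
    let ?c = "Abs_fps (\<lambda>l. - ksign (k + 1) * y (replicate l Y) Y)"
    have "phi k f = fps_deriv (char_series m) * ?c"
    proof (rule fps_ext)
      fix n
      have "fps_nth (phi k f) n = hdiff d m (k + 1) y (replicate n Y) One" unfolding phi_def dy by simp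
      also have "\<dots> = - ksign (k + 1) * fps_nth (fps_deriv (char_series m) * Abs_fps (\<lambda>l. y (replicate l Y) Y)) n"
        by (rule N2fps[OF Ny])
      also have "\<dots> = fps_nth (fps_deriv (char_series m) * ?c) n"
        unfolding fps_deriv_mult_nth by (simp add: sum_distrib_left algebra_simps)
      finally show "fps_nth (phi k f) n = fps_nth (fps_deriv (char_series m) * ?c) n" .
    qed
    moreover have "?c \<in> gfps Rg d (k + -1 - d)"
      unfolding gfps_def
    proof (intro CollectI allI)
      fix i
      have "y (replicate i Y) Y \<in> Rg (k + 1 + wdeg d (replicate i Y) - ldeg d Y)" using Hy unfolding hom_def by blast
      then show "fps_nth ?c i \<in> Rg (k + -1 - d + int i * (d + 2))"
        by (auto simp: wdeg_replicate algebra_simps intro!: Rg_uminus Rg_ksign)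
    qed
    ultimately show "phi k f \<in> gideal Rg d (fps_deriv (char_series m)) d (k + -1)"
      unfolding gideal_def by blast
  qed
qed

end


theorem proposition7p1:
  fixes Rg :: "int \<Rightarrow> 'r::comm_ring_1 set" and d :: int and m :: "'r cod"
  assumes "evenly_graded_ring Rg"
    and "even_moore_algebra Rg d m"
    and "\<forall>r. r * m [Y] One = 0 \<longrightarrow> r = 0"
  shows "\<exists>(s::int) (\<phi>::int \<Rightarrow> 'r cod \<Rightarrow> 'r fps).
    (\<forall>k. \<forall>f\<in>cocycles Rg d m k. \<phi> k f \<in> gfps Rg d (k + s)) \<and>
    (\<forall>k. \<forall>f\<in>cocycles Rg d m k. \<forall>g\<in>cocycles Rg d m k.
        \<phi> k (\<lambda>w b. f w b + g w b) = \<phi> k f + \<phi> k g) \<and>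
    (\<forall>j k r. \<forall>f\<in>cocycles Rg d m k. r \<in> Rg j \<longrightarrow>
        \<phi> (j + k) (\<lambda>w b. r * f w b) = fps_const r * \<phi> k f) \<and>
    (\<forall>k. \<forall>p\<in>gfps Rg d (k + s). \<exists>f\<in>cocycles Rg d m k.
        \<phi> k f - p \<in> gideal Rg d (fps_deriv (char_series m)) d (k + s)) \<and>
    (\<forall>k. \<forall>f\<in>cocycles Rg d m k.
        \<phi> k f \<in> gideal Rg d (fps_deriv (char_series m)) d (k + s) \<longleftrightarrow>
        f \<in> coboundaries Rg d m k)"
proof -
  have "moore Rg d m" using assms by (simp add: moore_def)
  then show ?thesis by (rule moore.main)
qed

end
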